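(* For every positive integer $n$, the map $\Psi$ (defined below) is a bijection from $\mathcal{W}^o_n$ to $\mathcal{W}^e_n$ satisfying $\operatorname{wt}(\Psi(w))=\operatorname{wt}(w)$ for all $w\in\mathcal{W}^o_n$.
   Context: Fix a finite totally ordered alphabet $A=\{a_1<\dots<a_k\}$. Words are finite sequences over $A$; $-$ denotes the empty word; $\mathcal{W}_n$ is the set of words of length $n$. $<$ is the lexicographic order on words (a proper prefix is smaller than the word). A formal symbol $\infty$ satisfies $w<\infty$ for every word $w$. A nonempty word is primitive if it is not of the form $r^j$, $j\ge2$; a Lyndon word is a nonempty word strictly smaller than each of its proper nonempty suffixes (equivalently, a primitive word strictly smaller than all other cyclic rotations of it); $\mathcal{L}$ denotes the set of Lyndon words. Every word has a unique Lyndon factorization $w=\ell_1\cdots\ell_m$ with $\ell_i\in\mathcal{L}$ and $\ell_1\ge\dots\ge\ell_m$; we write $w=\ell_1|\cdots|\ell_m$ and call the $\ell_i$ the Lyndon factors. A word is odd/even if its length is odd/even. For $\ell\in\mathcal{L}$ with $|\ell|\ge2$, its standard factorization is $\ell=rs$ where $s$ is the longest proper suffix of $\ell$ belonging to $\mathcal{L}$ (equivalently, the lexicographically smallest proper nonempty suffix); then $r\in\mathcal{L}$ and $r<\ell<s$. The weight $\operatorname{wt}(w)=x_1^{\beta_1}\cdots x_k^{\beta_k}$, where $\beta_i$ is the number of occurrences of $a_i$ in $w$. $\mathcal{W}^o_n$: words in $\mathcal{W}_n$ whose Lyndon factors are all odd and pairwise distinct. $\mathcal{W}^e_n$: words in $\mathcal{W}_n$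 whose Lyndon factors are all even except possibly one factor of length one. The map $\Psi$: on input $w\in\mathcal{W}^o_n$, set $(O,E)=(w,-)$. While $|O|\ge2$, apply the step $(\psi)$: let $O=o_1|\cdots|o_m$ be the Lyndon factorization of $O$ (with the convention $o_{m-1}=\infty$ if $m=1$). Call $o_m$ splittable if $|o_m|\ge2$ and its standard factorization $o_m=rs$ satisfies $s<o_{m-1}$. Update $(O,E)$ to: (S) $(o_1\cdots o_{m-1}r,\ sE)$ if $o_m$ is splittable and $r$ is odd; (P) $(o_1\cdots o_{m-1}s,\ rE)$ if $o_m$ is splittable and $r$ is even; (F) $(o_1\cdots o_{m-2},\ o_mo_{m-1}E)$ if $o_m$ is not splittable. If $|O|=1$ is reached, remove this letter from $O$ and insert it into $E$ as a new Lyndon factor, placed in the unique position keeping the Lyndon factors of $E$ weakly decreasing from left to right. When $O$ is empty, set $\Psi(w)=E$. *)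

theory Defs
  imports Main "HOL-Library.List_Lexorder"
begin

text \<open>Words over a totally ordered alphabet are lists of type 'a list with 'a::linorder.
  The order on words is the lexicographic order of HOL-Library.List_Lexorder
  (a proper prefix is smaller).\<close>

definition lyndon :: "'a::linorder list \<Rightarrow> bool" where
  "lyndon w \<longleftrightarrow> w \<noteq> [] \<and> (\<forall>k. 0 < k \<and> k < length w \<longrightarrow> w < drop k w)"

definition lyndon_fact :: "'a::linorder list \<Rightarrow> 'a list list" where
  "lyndon_fact w = (THE fs. concat fs = w \<and> (\<forall>f\<in>set fs. lyndon f) \<and> sorted_wrt (\<lambda>x y. y \<le> x) fs)"

definition std_cut :: "'a::linorder list \<Rightarrow> nat" where
  "std_cut l = (LEAST k. 0 < k \<and> k < length l \<and> lyndon (drop k l))"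

definition std_r :: "'a::linorder list \<Rightarrow> 'a list" where
  "std_r l = take (std_cut l) l"

definition std_s :: "'a::linorder list \<Rightarrow> 'a list" where
  "std_s l = drop (std_cut l) l"

text \<open>One step (psi) on the pair (O,E); identity when |O| < 2.
  With fs the Lyndon factorization of O, o_m = last fs and o_1...o_{m-1} = butlast fs;
  the convention o_{m-1} = infinity for m = 1 makes the condition s < o_{m-1} true.\<close>
definition psi_step :: "'a::linorder list \<times> 'a list \<Rightarrow> 'a list \<times> 'a list" where
  "psi_step OE = (case OE of (Ow, Ew) \<Rightarrow>
     if length Ow < 2 then (Ow, Ew) else
     (let fs = lyndon_fact Ow; om = last fs; pre = butlast fs;
          r = std_r om; s = std_s om;
          splittable = (2 \<le> length om \<and> (length fs = 1 \<or> s < last pre))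
      in if splittable \<and> odd (length r) then (concat pre @ r, s @ Ew)
         else if splittable then (concat pre @ s, r @ Ew)
         else (concat (butlast pre), om @ last pre @ Ew)))"

definition insert_letter :: "'a::linorder \<Rightarrow> 'a list \<Rightarrow> 'a list" where
  "insert_letter c Ew = (let fs = lyndon_fact Ew in
     concat (filter (\<lambda>e. \<not> e < [c]) fs @ [[c]] @ filter (\<lambda>e. e < [c]) fs))"

text \<open>The map Psi: iterate (psi) while |O| \<ge> 2 (each step strictly shortens O, so length w
  iterations suffice; afterwards psi_step is the identity), then handle |O| = 1.\<close>
definition Psi :: "'a::linorder list \<Rightarrow> 'a list" where
  "Psi w = (case (psi_step ^^ length w) (w, []) of (Ow, Ew) \<Rightarrow>
     if Ow = [] then Ew else insert_letter (hd Ow) Ew)"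

definition words :: "'a set \<Rightarrow> nat \<Rightarrow> 'a list set" where
  "words A n = {w. set w \<subseteq> A \<and> length w = n}"

definition W_odd :: "'a::linorder set \<Rightarrow> nat \<Rightarrow> 'a list set" where
  "W_odd A n = {w \<in> words A n. (\<forall>f\<in>set (lyndon_fact w). odd (length f)) \<and> distinct (lyndon_fact w)}"

definition W_even :: "'a::linorder set \<Rightarrow> nat \<Rightarrow> 'a list set" where
  "W_even A n = {w \<in> words A n.
     length (filter (\<lambda>f. odd (length f)) (lyndon_fact w)) \<le> 1 \<and>
     (\<forall>f\<in>set (lyndon_fact w). odd (length f) \<longrightarrow> length f = 1)}"

text \<open>Weight: exponent of each letter = number of its occurrences.\<close>
definition wt :: "'a list \<Rightarrow> 'a \<Rightarrow> nat" where
  "wt w = (\<lambda>a. count_list w a)"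

end

theory Submission
  imports Defs "HOL-Library.Multiset"
begin


lemma app_less_app_iff[simp]: "((p::'a::linorder list) @ u < p @ v) \<longleftrightarrow> u < v"
  by (induction p) auto

lemma app_le_app_iff[simp]: "((p::'a::linorder list) @ u \<le> p @ v) \<longleftrightarrow> u \<le> v"
  by (induction p) auto

lemma le_append: "(u::'a::linorder list) \<le> u @ v"
  by (induction u) auto

lemma less_appendI: "v \<noteq> [] \<Longrightarrow> (u::'a::linorder list) < u @ v"
  by (induction u) (auto simp: neq_Nil_conv)

lemma less_cases_app:
  "(u::'a::linorder list) < v \<Longrightarrow> (\<exists>w. v = u @ w \<and> w \<noteq> []) \<or> (\<forall>x y. u @ x < v @ y)"
proof (induction u arbitrary: v)
  case Nil
  then show ?case by (cases v) auto
next
  case (Cons a u)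
  then obtain b v' where v: "v = b # v'" by (cases v) auto
  show ?case
  proof (cases "a < b")
    case True
    then show ?thesis using v by auto
  next
    case False
    then have "a = b" "u < v'" using Cons.prems v by auto
    then show ?thesis using Cons.IH[of v'] v by auto
  qed
qed

lemma less_diverge:
  "(u::'a::linorder list) < v \<Longrightarrow> length v \<le> length u \<Longrightarrow> u @ x < v @ y"
  using less_cases_app[of u v] by auto

lemma less_not_prefix:
  "(u::'a::linorder list) < v \<Longrightarrow> \<not> (\<exists>w. v = u @ w) \<Longrightarrow> u @ x < v @ y"
  using less_cases_app[of u v] by auto

lemma le_prefix_trans: "(v::'a::linorder list) \<le> t \<Longrightarrow> v \<le> t @ x"
proof -
  assume "v \<le> t"
  then consider "v = t" | "v < t" by (auto simp: order.order_iff_strict)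
  then show ?thesis
  proof cases
    case 1 then show ?thesis using le_append by auto
  next
    case 2
    then consider w where "t = v @ w" | "\<forall>x y. v @ x < t @ y" using less_cases_app[of v t] by auto
    then show ?thesis
    proof cases
      case 1 then show ?thesis using le_append[of v "w @ x"] by simp
    next
      case 2 then show ?thesis using spec[OF spec[OF 2, of "[]"], of x] by simp
    qed
  qed
qed


lemma lyndon_suffix:
  assumes "lyndon w" "w = u @ v" "u \<noteq> []" "v \<noteq> []"
  shows "w < v"
proof -
  have "0 < length u" "length u < length w" using assms by auto
  then have "w < drop (length u) w" using assms(1) unfolding lyndon_def by blast
  then show ?thesis using assms(2) by simp
qed

lemma lyndon_suffix_div:
  assumes "lyndon w" "w = u @ v" "u \<noteq> []" "v \<noteq> []"
  shows "w @ x < v @ y"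
  using lyndon_suffix[OF assms] assms(2,3) by (intro less_diverge) auto

lemma lyndonI:
  assumes "w \<noteq> []" "\<And>u v. w = u @ v \<Longrightarrow> u \<noteq> [] \<Longrightarrow> v \<noteq> [] \<Longrightarrow> w < v"
  shows "lyndon w"
  unfolding lyndon_def
proof (intro conjI allI impI)
  fix k assume "0 < k \<and> k < length w"
  then show "w < drop k w" using assms(1) assms(2)[of "take k w" "drop k w"] by auto
qed (use assms in auto)

lemma lyndon_nonempty: "lyndon w \<Longrightarrow> w \<noteq> []"
  by (simp add: lyndon_def)

lemma lyndon_single[simp]: "lyndon [a]"
  by (rule lyndonI) (auto simp: Cons_eq_append_conv)

lemma lyndon_less_app: "lyndon v \<Longrightarrow> t \<noteq> [] \<Longrightarrow> t < v \<Longrightarrow> t @ v < (v::'a::linorder list)"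
proof -
  assume lv: "lyndon v" and t: "t \<noteq> []" "t < v"
  show ?thesis
  proof (cases "\<exists>w. v = t @ w")
    case True
    then obtain z where z: "v = t @ z" by blast
    then have "z \<noteq> []" using t by auto
    then have "v < z" using lyndon_suffix[OF lv z] t by auto
    then show ?thesis using z by simp
  next
    case False
    then show ?thesis using less_not_prefix[OF t(2) False, of v "[]"] by simp
  qed
qed

lemma lyndon_app:
  assumes lu: "lyndon u" and lv: "lyndon v" and uv: "u < v"
  shows "lyndon (u @ v)"
proof (rule lyndonI)
  show "u @ v \<noteq> []" using lu by (simp add: lyndon_def)
next
  have uvv: "u @ v < v"
    using lyndon_less_app[OF lv _ uv] lu by (simp add: lyndon_def)
  fix x y assume xy: "u @ v = x @ y" "x \<noteq> []" "y \<noteq> []"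
  show "u @ v < y"
  proof (cases "length x < length u")
    case True
    then obtain t where t: "u = x @ t" "y = t @ v" using xy
      unfolding append_eq_append_conv2 by (auto simp: append_eq_append_conv2)
    then have "t \<noteq> []" using True by auto
    then show ?thesis using lyndon_suffix_div[OF lu t(1) xy(2), of v v] t by simp
  next
    case False
    then obtain t where t: "x = u @ t" "v = t @ y" using xy
      unfolding append_eq_append_conv2 by auto
    show ?thesis
    proof (cases "t = []")
      case True then show ?thesis using t uvv by simp
    next
      case False
      then have "v < y" using lyndon_suffix[OF lv t(2)] xy by auto
      then show ?thesis using uvv by simp
    qed
  qed
qed

lemma lyndon_unbordered:
  assumes "lyndon w" "w = u @ v" "u \<noteq> []" "v \<noteq> []"
  shows "\<not> (\<exists>z. w = v @ z)"
proof
  assume "\<exists>z. w = v @ z"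
  then obtain z where "w = v @ z" by blast
  then have "v \<le> w" using le_append[of v z] by simp
  then show False using lyndon_suffix[OF assms] by simp
qed


definition valid :: "'a::linorder list list \<Rightarrow> bool" where
  "valid fs \<longleftrightarrow> (\<forall>f\<in>set fs. lyndon f) \<and> sorted_wrt (\<lambda>x y. y \<le> x) fs"

lemma valid_Nil[simp]: "valid []" by (simp add: valid_def)

lemma valid_Cons: "valid (f # fs) \<longleftrightarrow> lyndon f \<and> (\<forall>g\<in>set fs. g \<le> f) \<and> valid fs"
  by (auto simp: valid_def)

lemma valid_append: "valid (fs @ gs) \<longleftrightarrow> valid fs \<and> valid gs \<and> (\<forall>f\<in>set fs. \<forall>g\<in>set gs. g \<le> f)"
  by (auto simp: valid_def sorted_wrt_append)

lemma valid_single[simp]: "valid [f] \<longleftrightarrow> lyndon f" by (simp add: valid_def)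

lemma app_eq_prefix: "a @ b = c @ d \<Longrightarrow> length a \<le> length c \<Longrightarrow> \<exists>z. c = a @ z \<and> b = z @ d"
proof -
  assume eq: "a @ b = c @ d" and len: "length a \<le> length c"
  have "take (length a) (a @ b) = take (length a) (c @ d)" using eq by simp
  then have a: "a = take (length a) c" using len by simp
  have "drop (length a) (a @ b) = drop (length a) (c @ d)" using eq by simp
  then have b: "b = drop (length a) c @ d" using len by simp
  show ?thesis using a b by (metis append_take_drop_id)
qed

fun merge :: "'a::linorder list \<Rightarrow> 'a list list \<Rightarrow> 'a list list" where
  "merge x [] = [x]"
| "merge x (e # es) = (if x < e then merge (x @ e) es else x # e # es)"

lemma merge_props:
  "lyndon x \<Longrightarrow> valid es \<Longrightarrow> valid (merge x es) \<and> concat (merge x es) = x @ concat es"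
proof (induction x es rule: merge.induct)
  case (1 x) then show ?case by simp
next
  case (2 x e es)
  show ?case
  proof (cases "x < e")
    case True
    have "lyndon (x @ e)" using lyndon_app[OF 2(2) _ True] 2(3) by (simp add: valid_Cons)
    then show ?thesis using 2(1)[OF True] 2(3) True by (simp add: valid_Cons)
  next
    case False
    then have "e \<le> x" by simp
    then show ?thesis using 2 False by (auto simp: valid_Cons intro: order.trans)
  qed
qed

lemma merge_struct:
  "\<exists>k \<le> length es. merge x es = (x @ concat (take k es)) # drop k es \<and>
     (\<forall>i<k. x @ concat (take i es) < es ! i) \<and> (k < length es \<longrightarrow> \<not> x @ concat (take k es) < es ! k)"
proof (induction x es rule: merge.induct)
  case (1 x) then show ?case by simp
next
  case (2 x e es)
  show ?case
  proof (cases "x < e")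
    case True
    then obtain k where k: "k \<le> length es" "merge (x @ e) es = (x @ e @ concat (take k es)) # drop k es"
      "\<forall>i<k. x @ e @ concat (take i es) < es ! i" "k < length es \<longrightarrow> \<not> x @ e @ concat (take k es) < es ! k"
      using 2(1) by auto
    show ?thesis
    proof (intro exI[of _ "Suc k"] conjI allI impI)
      fix i assume "i < Suc k"
      then show "x @ concat (take i (e # es)) < (e # es) ! i"
        using k(3) True by (cases i) auto
    qed (use k True in auto)
  next
    case False
    then show ?thesis by (intro exI[of _ 0]) auto
  qed
qed

lemma LF_exists: "\<exists>fs. valid fs \<and> concat fs = (w::'a::linorder list)"
proof (induction w)
  case Nil then show ?case by (intro exI[of _ "[]"]) simp
next
  case (Cons a w)
  then obtain fs where "valid fs" "concat fs = w" by blast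
  then show ?case using merge_props[of "[a]" fs] by auto
qed

lemma valid_hd_ge: "valid fs \<Longrightarrow> g \<in> set fs \<Longrightarrow> g \<le> hd fs"
  by (cases fs) (auto simp: valid_Cons)

lemma prefix_suffix_le:
  "valid fs \<Longrightarrow> fs \<noteq> [] \<Longrightarrow> q \<noteq> [] \<Longrightarrow> concat fs = q @ r \<Longrightarrow> \<exists>t u. q = u @ t \<and> t \<noteq> [] \<and> t \<le> hd fs"
proof (induction fs arbitrary: q r)
  case Nil then show ?case by simp
next
  case (Cons g gs)
  show ?case
  proof (cases "length q \<le> length g")
    case True
    then obtain z where "g = q @ z" using Cons.prems(4) app_eq_prefix[of q r g "concat gs"]
      by auto
    then have "q \<le> g" using le_append by auto
    then show ?thesis using Cons.prems by (intro exI[of _ q] exI[of _ "[]"]) auto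
  next
    case False
    then obtain q' where q': "q = g @ q'" "concat gs = q' @ r" using Cons.prems(4)
      app_eq_prefix[of g "concat gs" q r] by auto
    then have "q' \<noteq> []" using False by auto
    then have "gs \<noteq> []" using q' by auto
    obtain t u where "q' = u @ t" "t \<noteq> []" "t \<le> hd gs"
      using Cons.IH[OF _ \<open>gs \<noteq> []\<close> \<open>q' \<noteq> []\<close> q'(2)] Cons.prems(1) by (auto simp: valid_Cons)
    moreover have "hd gs \<le> g" using Cons.prems(1) \<open>gs \<noteq> []\<close> by (cases gs) (auto simp: valid_Cons)
    ultimately show ?thesis using q' by (intro exI[of _ t] exI[of _ "g @ u"]) auto
  qed
qed

lemma first_longest:
  assumes "valid (f # fs)" "lyndon p" "concat (f # fs) = p @ r"
  shows "length p \<le> length f"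
proof (rule ccontr)
  assume "\<not> length p \<le> length f"
  then obtain q where q: "p = f @ q" "concat fs = q @ r" using assms(3)
    app_eq_prefix[of f "concat fs" p r] by auto
  then have "q \<noteq> []" using \<open>\<not> length p \<le> length f\<close> by auto
  then have "fs \<noteq> []" using q by auto
  obtain t u where tu: "q = u @ t" "t \<noteq> []" "t \<le> hd fs"
    using prefix_suffix_le[OF _ \<open>fs \<noteq> []\<close> \<open>q \<noteq> []\<close> q(2)] assms(1) by (auto simp: valid_Cons)
  have "hd fs \<le> f" using assms(1) \<open>fs \<noteq> []\<close> by (cases fs) (auto simp: valid_Cons)
  have "f \<noteq> []" using assms(1) by (auto simp: valid_Cons lyndon_def)
  have "p < t" using lyndon_suffix[OF assms(2), of "f @ u" t] q tu \<open>f \<noteq> []\<close> by auto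
  moreover have "f \<le> p" using q le_append by auto
  ultimately show False using tu(3) \<open>hd fs \<le> f\<close> by simp
qed

lemma LF_unique: "valid fs \<Longrightarrow> valid gs \<Longrightarrow> concat fs = concat gs \<Longrightarrow> fs = gs"
proof (induction fs arbitrary: gs)
  case Nil
  then show ?case by (cases gs) (auto simp: valid_Cons lyndon_def)
next
  case (Cons f fs)
  have vf: "lyndon f" "valid fs" using Cons.prems(1) by (simp_all add: valid_Cons)
  have "f \<noteq> []" using vf(1) by (rule lyndon_nonempty)
  then obtain g gs' where gs: "gs = g # gs'" using Cons.prems(3) by (cases gs) auto
  have vg: "lyndon g" "valid gs'" using Cons.prems(2) gs by (simp_all add: valid_Cons)
  have eq: "f @ concat fs = g @ concat gs'" using Cons.prems(3) gs by simp
  have l1: "length g \<le> length f" using first_longest[OF Cons.prems(1) vg(1)] eq by simp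
  have l2: "length f \<le> length g" using first_longest[of g gs' f "concat fs"] Cons.prems(2) gs vf(1) eq by simp
  obtain z where z: "g = f @ z" "concat fs = z @ concat gs'" using app_eq_prefix[OF eq l2] by blast
  then have "z = []" using l1 by simp
  then have "f = g" "concat fs = concat gs'" using z by simp_all
  then show ?case using Cons.IH[OF vf(2) vg(2)] gs by simp
qed

lemma LF_concat: "valid fs \<Longrightarrow> lyndon_fact (concat fs) = fs"
  unfolding lyndon_fact_def
  by (rule the_equality) (auto simp: valid_def intro: LF_unique[unfolded valid_def])

lemma LF_props: "valid (lyndon_fact w) \<and> concat (lyndon_fact w) = w"
proof -
  obtain fs where fs: "valid fs" "concat fs = w" using LF_exists by blast
  then have "lyndon_fact w = fs" using LF_concat[OF fs(1)] by simp
  then show ?thesis using fs by simp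
qed

lemma LF_valid: "valid (lyndon_fact w)" using LF_props by blast
lemma LF_concat2[simp]: "concat (lyndon_fact w) = w" using LF_props by blast

lemma LF_Nil_iff[simp]: "lyndon_fact w = [] \<longleftrightarrow> w = []"
proof
  assume "lyndon_fact w = []"
  then show "w = []" using LF_concat2[of w] by simp
next
  assume "w = []"
  then show "lyndon_fact w = []" using LF_concat[of "[]"] by simp
qed

lemma hd_le_concat: "fs \<noteq> [] \<Longrightarrow> hd fs \<le> concat (fs::'a::linorder list list)"
proof -
  assume "fs \<noteq> []"
  then obtain f gs where "fs = f # gs" by (cases fs) auto
  then show ?thesis using le_append[of f "concat gs"] by simp
qed

lemma H1: "valid es \<Longrightarrow> es \<noteq> [] \<Longrightarrow> concat es < t \<Longrightarrow> hd es < t"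
  using hd_le_concat[of es] by (meson le_less_trans)

lemma H2: "lyndon t \<Longrightarrow> valid es \<Longrightarrow> es \<noteq> [] \<Longrightarrow> hd es < t \<Longrightarrow> concat es < t"
proof (induction es arbitrary: t)
  case Nil then show ?case by simp
next
  case (Cons e es)
  show ?case
  proof (cases "es = []")
    case True then show ?thesis using Cons by simp
  next
    case False
    have "e < t" using Cons by simp
    then consider y where "t = e @ y" "y \<noteq> []" | "\<forall>x y. e @ x < t @ y" using less_cases_app by blast
    then show ?thesis
    proof cases
      case 1
      have "e \<noteq> []" using Cons.prems by (auto simp: valid_Cons lyndon_def)
      define ys where "ys = lyndon_fact y"
      have ys: "valid ys" "concat ys = y" "ys \<noteq> []" using LF_props[of y] 1 by (auto simp: ys_def)
      have "lyndon (last ys)" using ys(1,3) unfolding valid_def by simp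
      then have "last ys \<noteq> []" by (rule lyndon_nonempty)
      have "concat ys = concat (butlast ys @ [last ys])" using ys(3) by simp
      then have "y = concat (butlast ys) @ last ys" using ys(2) by simp
      then have teq: "t = (e @ concat (butlast ys)) @ last ys" using 1 by simp
      have "t < last ys"
        by (rule lyndon_suffix[OF Cons.prems(1) teq]) (use \<open>e \<noteq> []\<close> \<open>last ys \<noteq> []\<close> in simp_all)
      moreover have "last ys \<le> hd ys" using valid_hd_ge[OF ys(1) last_in_set[OF ys(3)]] .
      moreover have "hd es \<le> e" using Cons.prems False by (cases es) (auto simp: valid_Cons)
      ultimately have "hd es < hd ys" using \<open>e < t\<close> by order
      moreover have "lyndon (hd ys)" using ys(1,3) unfolding valid_def by simp
      moreover have "valid es" using Cons.prems(2) by (simp add: valid_Cons)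
      ultimately have "concat es < hd ys" using Cons.IH[of "hd ys"] False by blast
      then have "concat es < y" using hd_le_concat[OF ys(3)] ys(2) by simp
      then show ?thesis using 1 by simp
    next
      case 2 then show ?thesis using spec[OF spec[OF 2, of "concat es"], of "[]"] by simp
    qed
  qed
qed


lemma std_cut_props:
  assumes "2 \<le> length l"
  shows "0 < std_cut l \<and> std_cut l < length l \<and> lyndon (drop (std_cut l) l)"
proof -
  have "drop (length l - 1) l = [last l]" using assms
    by (cases l rule: rev_cases) auto
  then have P: "0 < length l - 1 \<and> length l - 1 < length l \<and> lyndon (drop (length l - 1) l)"
    using assms by simp
  show ?thesis unfolding std_cut_def
    by (rule LeastI[where P="\<lambda>k. 0 < k \<and> k < length l \<and> lyndon (drop k l)", OF P])
qed

lemma std_cut_least: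
  "0 < j \<Longrightarrow> j < length l \<Longrightarrow> lyndon (drop j l) \<Longrightarrow> std_cut l \<le> j"
  unfolding std_cut_def by (rule Least_le) simp

lemma std_rs: "std_r l @ std_s l = l"
  by (simp add: std_r_def std_s_def)

lemma std_basic:
  assumes "2 \<le> length l"
  shows "std_r l \<noteq> [] \<and> std_s l \<noteq> [] \<and> lyndon (std_s l) \<and> length (std_r l) = std_cut l
     \<and> length (std_r l) + length (std_s l) = length l"
  using std_cut_props[OF assms] by (auto simp: std_r_def std_s_def)

lemma std_s_min:
  assumes ly: "lyndon l" and len: "2 \<le> length l" and j: "0 < j" "j < length l"
  shows "std_s l \<le> drop j l"
proof -
  define J where "J = {1..<length l}"
  have fin: "finite ((\<lambda>j. drop j l) ` J)" and ne: "(\<lambda>j. drop j l) ` J \<noteq> {}"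
    using len by (auto simp: J_def)
  define t where "t = Min ((\<lambda>j. drop j l) ` J)"
  have "t \<in> (\<lambda>j. drop j l) ` J" using Min_in[OF fin ne] by (simp add: t_def)
  then obtain j0 where j0: "j0 \<in> J" "t = drop j0 l" by blast
  have tmin: "\<And>i. 0 < i \<Longrightarrow> i < length l \<Longrightarrow> t \<le> drop i l"
    unfolding t_def using fin by (intro Min_le) (auto simp: J_def)
  have lt: "lyndon t"
  proof (rule lyndonI)
    show "t \<noteq> []" using j0 by (auto simp: J_def)
  next
    fix u v assume uv: "t = u @ v" "u \<noteq> []" "v \<noteq> []"
    have "v = drop (length u) t" using uv by simp
    also have "\<dots> = drop (j0 + length u) l" using j0(2) by (simp add: add.commute)
    finally have v: "v = drop (j0 + length u) l" .
    have "length t = length l - j0" using j0(2) by simp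
    then have "length u + length v = length l - j0" using uv by simp
    moreover have "length v > 0" "length u > 0" "j0 > 0" "j0 < length l" using uv j0 by (auto simp: J_def)
    ultimately have b: "0 < j0 + length u" "j0 + length u < length l" by linarith+
    have "t \<le> v" using tmin[OF b] v by simp
    moreover have "t \<noteq> v" using uv by auto
    ultimately show "t < v" by simp
  qed
  have k: "std_cut l \<le> j0" using std_cut_least[of j0 l] j0 lt by (auto simp: J_def)
  have "std_s l = t"
  proof (rule ccontr)
    assume ne: "std_s l \<noteq> t"
    have "std_cut l \<noteq> j0" using ne j0(2) by (auto simp: std_s_def)
    then have "std_cut l < j0" using k by simp
    let ?k = "std_cut l"
    have "drop (j0 - ?k) (std_s l) = drop (j0 - ?k + ?k) l" by (simp add: std_s_def)
    also have "j0 - ?k + ?k = j0" using \<open>?k < j0\<close> by simp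
    finally have "drop (j0 - ?k) (std_s l) = t" using j0(2) by simp
    then have "std_s l = take (j0 - ?k) (std_s l) @ t" using append_take_drop_id[of "j0 - ?k" "std_s l"] by simp
    moreover have "take (j0 - ?k) (std_s l) \<noteq> []" using \<open>?k < j0\<close> j0 by (auto simp: std_s_def J_def)
    moreover have "t \<noteq> []" using lt lyndon_nonempty by blast
    ultimately have "std_s l < t" using lyndon_suffix[of "std_s l"] std_basic[OF len] by blast
    moreover have "t \<le> std_s l" using tmin std_cut_props[OF len] by (simp add: std_s_def)
    ultimately show False by simp
  qed
  then show ?thesis using tmin j by simp
qed

lemma std_r_lyndon:
  assumes ly: "lyndon l" and len: "2 \<le> length l"
  shows "lyndon (std_r l)"
proof (rule lyndonI)
  show "std_r l \<noteq> []" using std_basic[OF len] by simp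
next
  let ?r = "std_r l" and ?s = "std_s l"
  fix p u assume pu: "?r = p @ u" "p \<noteq> []" "u \<noteq> []"
  show "?r < u"
  proof (rule ccontr)
    assume "\<not> ?r < u"
    moreover have "?r \<noteq> u" using pu by auto
    ultimately have ur: "u < ?r" by simp
    have l: "l = p @ (u @ ?s)" using std_rs[of l] pu by simp
    have s_ne: "?s \<noteq> []" using std_basic[OF len] by simp
    have lus: "l < u @ ?s" using lyndon_suffix[OF ly l pu(2)] pu(3) by simp
    consider w where "?r = u @ w" "w \<noteq> []" | "\<forall>x y. u @ x < ?r @ y" using less_cases_app[OF ur] by blast
    then show False
    proof cases
      case 1
      have l2: "l = u @ (w @ ?s)" using std_rs[of l] 1 by simp
      have "u @ (w @ ?s) < u @ ?s" using lus l2 by (simp only:)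
      then have "w @ ?s < ?s" by (simp only: app_less_app_iff)
      moreover have "?s \<le> w @ ?s"
      proof -
        have "drop (length u) l = drop (length u) (u @ (w @ ?s))" using arg_cong[OF l2, of "drop (length u)"] .
        then have "w @ ?s = drop (length u) l" by simp
        moreover have "length l = length (u @ (w @ ?s))" using arg_cong[OF l2, of length] .
        then have "0 < length u" "length u < length l" using pu(3) 1(2) by auto
        ultimately show ?thesis using std_s_min[OF ly len] by simp
      qed
      ultimately show False by simp
    next
      case 2
      then have "u @ ?s < ?r @ ?s" by blast
      then show False using lus std_rs[of l] by simp
    qed
  qed
qed

lemma std_order:
  assumes ly: "lyndon l" and len: "2 \<le> length l"
  shows "std_r l < l \<and> l < std_s l \<and> std_r l < std_s l"
proof -
  have a: "std_r l < l" using less_appendI[of "std_s l" "std_r l"] std_basic[OF len] std_rs[of l] by simp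
  have b: "l < std_s l" using lyndon_suffix[OF ly std_rs[of l, symmetric]] std_basic[OF len] by simp
  show ?thesis using a b by simp
qed

lemma StdA:
  assumes ly: "lyndon w" and len: "2 \<le> length w" and lenr: "2 \<le> length (std_r w)"
  shows "std_s w \<le> std_s (std_r w)"
proof (rule ccontr)
  let ?u = "std_r w" and ?v = "std_s w"
  let ?t = "std_s ?u" and ?ru = "std_r ?u"
  assume "\<not> ?v \<le> ?t"
  then have tv: "?t < ?v" by simp
  have lv: "lyndon ?v" using std_basic[OF len] by simp
  have tne: "?t \<noteq> []" using std_basic[OF lenr] by simp
  have "?t @ ?v < ?v" using lyndon_less_app[OF lv tne tv] .
  moreover have "?v \<le> ?t @ ?v"
  proof -
    have e1: "?u = ?ru @ ?t" using std_rs[of ?u] by simp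
    have "w = ?u @ ?v" using std_rs[of w] by simp
    then have "w = (?ru @ ?t) @ ?v" using e1 by (simp only:)
    then have w: "w = ?ru @ (?t @ ?v)" by (simp only: append_assoc)
    have "?ru \<noteq> []" using std_basic[OF lenr] by simp
    moreover have "length w = length (?ru @ (?t @ ?v))" using arg_cong[OF w, of length] .
    ultimately have "0 < length ?ru" "length ?ru < length w" using tne by auto
    moreover have "drop (length ?ru) w = ?t @ ?v" using w by (metis append_eq_conv_conj)
    ultimately show ?thesis using std_s_min[OF ly len, of "length ?ru"] by simp
  qed
  ultimately show False by simp
qed

lemma StdB:
  assumes lu: "lyndon u" and lv: "lyndon v" and uv: "u < v"
    and c: "length u = 1 \<or> v \<le> std_s u"
  shows "std_cut (u @ v) = length u" "std_r (u @ v) = u" "std_s (u @ v) = v"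
proof -
  have une: "u \<noteq> []" and vne: "v \<noteq> []" using lu lv lyndon_nonempty by auto
  have "std_cut (u @ v) = length u"
    unfolding std_cut_def
  proof (rule Least_equality)
    show "0 < length u \<and> length u < length (u @ v) \<and> lyndon (drop (length u) (u @ v))"
      using une vne lv by simp
  next
    fix j assume j: "0 < j \<and> j < length (u @ v) \<and> lyndon (drop j (u @ v))"
    show "length u \<le> j"
    proof (rule ccontr)
      assume "\<not> length u \<le> j"
      then have jl: "j < length u" by simp
      then have len2: "2 \<le> length u" using j by linarith
      then have "v \<le> std_s u" using c by simp
      also have "std_s u \<le> drop j u" using std_s_min[OF lu len2] j jl by simp
      finally have "v \<le> drop j u" .
      then have "v \<le> drop j u @ v" by (rule le_prefix_trans)
      moreover have "drop j u @ v < v"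
      proof -
        have "drop j (u @ v) = drop j u @ v" using jl by simp
        moreover have "drop j u \<noteq> []" using jl by simp
        ultimately show ?thesis using lyndon_suffix[of "drop j u @ v" "drop j u" v] j vne by simp
      qed
      ultimately show False by simp
    qed
  qed
  then show "std_cut (u @ v) = length u" "std_r (u @ v) = u" "std_s (u @ v) = v"
    by (simp_all add: std_r_def std_s_def)
qed


definition goodL :: "'a::linorder list list \<Rightarrow> 'a list list \<Rightarrow> bool" where
  "goodL os es \<longleftrightarrow> (\<forall>f\<in>set os. odd (length f)) \<and> distinct os \<and> (\<forall>e\<in>set es. even (length e)) \<and>
     (es \<noteq> [] \<longrightarrow> (\<forall>q\<in>set (butlast os). hd es < q) \<and>
        (os \<noteq> [] \<and> 2 \<le> length (last os) \<longrightarrow> hd es \<le> std_s (last os)))"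

definition good :: "'a::linorder list \<times> 'a list \<Rightarrow> bool" where
  "good z \<longleftrightarrow> goodL (lyndon_fact (fst z)) (lyndon_fact (snd z))"

lemma psi_S:
  assumes "2 \<le> length Ow" "lyndon_fact Ow = pre @ [om]" "2 \<le> length om" "pre = [] \<or> std_s om < last pre"
    "odd (length (std_r om))"
  shows "psi_step (Ow, E) = (concat pre @ std_r om, std_s om @ E)"
  using assms by (auto simp add: psi_step_def Let_def)

lemma psi_P:
  assumes "2 \<le> length Ow" "lyndon_fact Ow = pre @ [om]" "2 \<le> length om" "pre = [] \<or> std_s om < last pre"
    "even (length (std_r om))"
  shows "psi_step (Ow, E) = (concat pre @ std_s om, std_r om @ E)"
  using assms by (auto simp add: psi_step_def Let_def)

lemma psi_F:
  assumes "2 \<le> length Ow" "lyndon_fact Ow = pre @ [om]" "\<not> (2 \<le> length om \<and> (pre = [] \<or> std_s om < last pre))"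
  shows "psi_step (Ow, E) = (concat (butlast pre), om @ last pre @ E)"
  using assms by (auto simp add: psi_step_def Let_def)

lemma even_concat: "\<forall>e\<in>set es. even (length e) \<Longrightarrow> even (length (concat es))"
  by (induction es) auto

lemma even_merge: "even (length x) \<Longrightarrow> \<forall>e\<in>set es. even (length e) \<Longrightarrow> \<forall>e\<in>set (merge x es). even (length e)"
proof -
  assume a: "even (length x)" "\<forall>e\<in>set es. even (length e)"
  obtain k where k: "merge x es = (x @ concat (take k es)) # drop k es" using merge_struct[of es x] by blast
  have "\<forall>e\<in>set (take k es). even (length e)" using a(2) by (meson in_set_takeD)
  then have "even (length (concat (take k es)))" by (rule even_concat)
  then show ?thesis using k a by (auto dest: in_set_dropD)
qed

lemma valid_lyndon: "valid fs \<Longrightarrow> f \<in> set fs \<Longrightarrow> lyndon f"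
  by (simp add: valid_def)

lemma valid_snoc_le: "valid (pre @ [om]) \<Longrightarrow> f \<in> set pre \<Longrightarrow> om \<le> f"
  by (simp add: valid_append)

lemma valid_last_le: "valid pre \<Longrightarrow> pre \<noteq> [] \<Longrightarrow> f \<in> set pre \<Longrightarrow> last pre \<le> f"
proof -
  assume a: "valid pre" "pre \<noteq> []" "f \<in> set pre"
  obtain p2 l where p: "pre = p2 @ [l]" using a(2) by (cases pre rule: rev_cases) auto
  show ?thesis using a p by (auto simp: valid_append)
qed

lemma lyndon_app_less_suffix: "lyndon s \<Longrightarrow> r < s \<Longrightarrow> E < s \<Longrightarrow> r @ E < s"
proof -
  assume ls: "lyndon s" and rs: "r < s" and Es: "E < s"
  consider y where "s = r @ y" "y \<noteq> []" | "\<forall>x y. r @ x < s @ y" using less_cases_app[OF rs] by blast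
  then show ?thesis
  proof cases
    case 1
    show ?thesis
    proof (cases "r = []")
      case True then show ?thesis using Es by simp
    next
      case False
      then have "s < y" using lyndon_suffix[OF ls 1(1)] 1(2) by simp
      then have "E < y" using Es by simp
      then show ?thesis using 1 by simp
    qed
  next
    case 2 then show ?thesis using spec[OF spec[OF 2, of E], of "[]"] by simp
  qed
qed

lemma lyndon_app_less_right: "lyndon a \<Longrightarrow> om < a \<Longrightarrow> om \<noteq> [] \<Longrightarrow> om @ a @ E < a"
proof -
  assume la: "lyndon a" and oa: "om < a" and one: "om \<noteq> []"
  consider y where "a = om @ y" "y \<noteq> []" | "\<forall>x y. om @ x < a @ y" using less_cases_app[OF oa] by blast
  then show ?thesis
  proof cases
    case 1
    have "a @ E < y @ []" using lyndon_suffix_div[OF la 1(1) one 1(2)] by blast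
    then show ?thesis using 1 by simp
  next
    case 2 then show ?thesis using spec[OF spec[OF 2, of "a @ E"], of "[]"] by simp
  qed
qed

lemma forward:
  assumes g: "good (Ow, E)" and len: "2 \<le> length Ow"
  shows "good (psi_step (Ow, E)) \<and> snd (psi_step (Ow, E)) \<noteq> [] \<and>
    mset (fst (psi_step (Ow, E)) @ snd (psi_step (Ow, E))) = mset (Ow @ E) \<and>
    length (fst (psi_step (Ow, E))) < length Ow"
proof -
  define os where "os = lyndon_fact Ow"
  define es where "es = lyndon_fact E"
  have vos: "valid os" and cos: "concat os = Ow" and ves: "valid es" and ces: "concat es = E"
    using LF_props os_def es_def by auto
  have gl: "goodL os es" using g by (simp add: good_def os_def es_def)
  have "os \<noteq> []" using len cos by auto
  then obtain pre om where osd: "os = pre @ [om]" by (cases os rule: rev_cases) auto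
  have lom: "lyndon om" using vos osd by (simp add: valid_def)
  have vpre: "valid pre" using vos osd by (simp add: valid_append)
  have om_le: "\<And>f. f \<in> set pre \<Longrightarrow> om < f"
  proof -
    fix f assume f: "f \<in> set pre"
    then have "om \<le> f" using valid_snoc_le vos osd by blast
    moreover have "om \<noteq> f" using gl osd f by (auto simp: goodL_def)
    ultimately show "om < f" by simp
  qed
  have odd_om: "odd (length om)" using gl osd by (simp add: goodL_def)
  have odd_pre: "\<forall>f\<in>set pre. odd (length f)" using gl osd by (simp add: goodL_def)
  have dist_pre: "distinct pre" using gl osd by (simp add: goodL_def)
  have even_es: "\<forall>e\<in>set es. even (length e)" using gl by (simp add: goodL_def)
  have c2a: "es \<noteq> [] \<Longrightarrow> f \<in> set pre \<Longrightarrow> hd es < f" for f using gl osd by (simp add: goodL_def)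
  have c2b: "es \<noteq> [] \<Longrightarrow> 2 \<le> length om \<Longrightarrow> hd es \<le> std_s om" using gl osd by (simp add: goodL_def)
  have es_le_hd: "\<And>e. e \<in> set es \<Longrightarrow> e \<le> hd es" using valid_hd_ge[OF ves] by blast
  have LFO: "lyndon_fact Ow = pre @ [om]" using os_def osd by simp
  have Oeq: "Ow = concat pre @ om" using cos osd by simp
  then have lenO: "length Ow = length (concat pre) + length om" by simp
  have msO: "mset Ow = mset (concat pre) + mset om" using Oeq by simp
  let ?sp = "2 \<le> length om \<and> (pre = [] \<or> std_s om < last pre)"
  let ?r = "std_r om" and ?s = "std_s om"
  show ?thesis
  proof (cases ?sp)
    case sp: True
    have len_om: "2 \<le> length om" using sp by simp
    have sb: "?r \<noteq> [] \<and> ?s \<noteq> [] \<and> lyndon ?s \<and> length ?r + length ?s = length om"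
      using std_basic[OF len_om] by simp
    have lens: "0 < length ?r" "0 < length ?s" "length ?r + length ?s = length om" using sb by auto
    have lr: "lyndon ?r" using std_r_lyndon[OF lom len_om] .
    have ord: "?r < om" "om < ?s" "?r < ?s" using std_order[OF lom len_om] by auto
    have s_lt_pre: "\<And>f. f \<in> set pre \<Longrightarrow> ?s < f"
    proof -
      fix f assume f: "f \<in> set pre"
      then have "pre \<noteq> []" by auto
      then have "?s < last pre" using sp by simp
      also have "last pre \<le> f" using valid_last_le[OF vpre \<open>pre \<noteq> []\<close> f] .
      finally show "?s < f" .
    qed
    have mset_om: "mset om = mset ?r + mset ?s" using std_rs[of om] by (metis mset_append)
    show ?thesis
    proof (cases "odd (length ?r)")
      case True
      have ps: "psi_step (Ow, E) = (concat pre @ ?r, ?s @ E)" using psi_S[OF len LFO] sp True by simp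
      have v1: "valid (pre @ [?r])" using vpre lr om_le ord by (auto simp: valid_append intro: order.strict_implies_order order.strict_trans)
      have "\<forall>g\<in>set es. g \<le> ?s"
      proof
        fix g assume g: "g \<in> set es"
        then have "es \<noteq> []" by auto
        then show "g \<le> ?s" using es_le_hd[OF g] c2b[OF _ len_om] by (meson order.trans)
      qed
      then have v2: "valid (?s # es)" using ves sb by (simp add: valid_Cons)
      have LF1: "lyndon_fact (concat pre @ ?r) = pre @ [?r]" using LF_concat[OF v1] by simp
      have LF2: "lyndon_fact (?s @ E) = ?s # es" using LF_concat[OF v2] ces by simp
      have "goodL (pre @ [?r]) (?s # es)"
        unfolding goodL_def
      proof (intro conjI impI ballI)
        show "distinct (pre @ [?r])" using dist_pre om_le ord by (auto dest: order.strict_trans)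
        have "length ?r + length ?s = length om" using sb by simp
        then have "even (length ?s)" using odd_om True by (metis even_add)
        then show "even (length e)" if "e \<in> set (?s # es)" for e
          using that even_es by auto
        show "hd (?s # es) < q" if "q \<in> set (butlast (pre @ [?r]))" for q
          using that s_lt_pre by simp
        show "hd (?s # es) \<le> std_s (last (pre @ [?r]))" if "pre @ [?r] \<noteq> [] \<and> 2 \<le> length (last (pre @ [?r]))"
          using that StdA[OF lom len_om] by simp
      qed (use odd_pre True in auto)
      then have "good (psi_step (Ow, E))" using ps LF1 LF2 by (simp add: good_def)
      moreover have "length (concat pre @ ?r) < length Ow" unfolding length_append using lenO lens by linarith
      ultimately show ?thesis using ps sb msO mset_om by (simp add: ac_simps)
    next
      case False
      have ps: "psi_step (Ow, E) = (concat pre @ ?s, ?r @ E)" using psi_P[OF len LFO] sp False by simp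
      have v1: "valid (pre @ [?s])" using vpre sb s_lt_pre by (auto simp: valid_append intro: less_imp_le)
      have vm: "valid (merge ?r es) \<and> concat (merge ?r es) = ?r @ E" using merge_props[OF lr ves] ces by simp
      have LF1: "lyndon_fact (concat pre @ ?s) = pre @ [?s]" using LF_concat[OF v1] by simp
      have LF2: "lyndon_fact (?r @ E) = merge ?r es" using LF_concat[of "merge ?r es"] vm by simp
      have "length ?r + length ?s = length om" using sb by simp
      then have odd_s: "odd (length ?s)" using odd_om False by (metis even_add)
      have rE: "?r @ E < ?s"
      proof (cases "es = []")
        case True then show ?thesis using ces ord by simp
      next
        case False
        have "hd es \<le> ?s" using c2b[OF False len_om] .
        moreover have "hd es \<noteq> ?s" using even_es False odd_s by (metis hd_in_set)
        ultimately have "hd es < ?s" by simp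
        then have "E < ?s" using H2[OF _ ves False] sb ces by simp
        then show ?thesis using lyndon_app_less_suffix[of ?s ?r E] sb ord by simp
      qed
      have mne: "merge ?r es \<noteq> []" using vm sb by auto
      have hs: "hd (merge ?r es) < ?s" using H1[OF _ mne] vm rE by simp
      have "goodL (pre @ [?s]) (merge ?r es)"
        unfolding goodL_def
      proof (intro conjI impI ballI)
        show "distinct (pre @ [?s])" using dist_pre s_lt_pre by auto
        show "even (length e)" if "e \<in> set (merge ?r es)" for e
          using that even_merge[of ?r es] even_es False by auto
        show "hd (merge ?r es) < q" if "q \<in> set (butlast (pre @ [?s]))" for q
          using that s_lt_pre hs by (auto intro: order.strict_trans)
        show "hd (merge ?r es) \<le> std_s (last (pre @ [?s]))" if "pre @ [?s] \<noteq> [] \<and> 2 \<le> length (last (pre @ [?s]))"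
          using that std_order[of ?s] sb hs by (auto intro: order.strict_implies_order order.strict_trans)
      qed (use odd_pre odd_s in auto)
      then have "good (psi_step (Ow, E))" using ps LF1 LF2 by (simp add: good_def)
      moreover have "length (concat pre @ ?s) < length Ow" unfolding length_append using lenO lens by linarith
      ultimately show ?thesis using ps sb msO mset_om by (simp add: ac_simps)
    qed
  next
    case nsp: False
    have "pre \<noteq> []" using nsp len cos osd by auto
    then obtain pre2 a where pd: "pre = pre2 @ [a]" by (cases pre rule: rev_cases) auto
    have ps: "psi_step (Ow, E) = (concat pre2, om @ a @ E)" using psi_F[OF len LFO nsp] pd by simp
    have la: "lyndon a" using vpre pd by (simp add: valid_def)
    have oa: "om < a" using om_le pd by simp
    have one: "om \<noteq> []" using lom lyndon_nonempty by blast
    have lx: "lyndon (om @ a)" using lyndon_app[OF lom la oa] .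
    have vpre2: "valid pre2" using vpre pd by (simp add: valid_append)
    have a_lt: "\<And>f. f \<in> set pre2 \<Longrightarrow> a < f"
    proof -
      fix f assume f: "f \<in> set pre2"
      have "a \<le> f" using vpre pd f by (simp add: valid_append)
      moreover have "a \<noteq> f" using dist_pre pd f by auto
      ultimately show "a < f" by simp
    qed
    have vm: "valid (merge (om @ a) es) \<and> concat (merge (om @ a) es) = om @ a @ E" using merge_props[OF lx ves] ces by simp
    have LF1: "lyndon_fact (concat pre2) = pre2" using LF_concat[OF vpre2] .
    have LF2: "lyndon_fact (om @ a @ E) = merge (om @ a) es" using LF_concat[of "merge (om @ a) es"] vm by simp
    have mne: "merge (om @ a) es \<noteq> []" using vm one by auto
    have hs: "hd (merge (om @ a) es) < a" using H1[OF _ mne] vm lyndon_app_less_right[OF la oa one] by simp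
    have odd_a: "odd (length a)" using odd_pre pd by simp
    have "goodL pre2 (merge (om @ a) es)"
      unfolding goodL_def
    proof (intro conjI impI ballI)
      show "distinct pre2" using dist_pre pd by simp
      show "even (length e)" if "e \<in> set (merge (om @ a) es)" for e
        using that even_merge[of "om @ a" es] even_es odd_om odd_a by (simp add: odd_add)
      show "hd (merge (om @ a) es) < q" if "q \<in> set (butlast pre2)" for q
        using that a_lt hs by (auto intro: order.strict_trans dest: in_set_butlastD)
      show "hd (merge (om @ a) es) \<le> std_s (last pre2)" if "pre2 \<noteq> [] \<and> 2 \<le> length (last pre2)"
      proof -
        have "lyndon (last pre2)" using vpre2 that by (simp add: valid_def)
        then have "last pre2 < std_s (last pre2)" using std_order that by blast
        moreover have "a < last pre2" using a_lt that by simp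
        ultimately show ?thesis using hs by simp
      qed
    qed (use odd_pre pd in auto)
    then have "good (psi_step (Ow, E))" using ps LF1 LF2 by (simp add: good_def)
    moreover have "length (concat pre2) < length Ow" using lenO pd one by simp
    ultimately show ?thesis using ps msO pd one by (simp add: ac_simps)
  qed
qed


definition bok :: "'a::linorder list option \<Rightarrow> 'a list \<Rightarrow> bool" where
  "bok b v = (case b of None \<Rightarrow> True | Some q \<Rightarrow> v < q)"

lemma bok_simps[simp]: "bok None v" "bok (Some q) v \<longleftrightarrow> v < q"
  by (simp_all add: bok_def)

function peel :: "'a::linorder list option \<Rightarrow> 'a list \<Rightarrow> 'a list \<times> 'a list list" where
  "peel b w = (if 2 \<le> length w \<and> even (length (std_s w)) \<and> bok b (std_s w)
     then (case peel b (std_r w) of (x, ps) \<Rightarrow> (x, ps @ [std_s w])) else (w, []))"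
  by pat_completeness auto
termination
proof (relation "measure (\<lambda>(b, w). length w)")
  fix b and w :: "'a list"
  assume "2 \<le> length w \<and> even (length (std_s w)) \<and> bok b (std_s w)"
  then have "std_s w \<noteq> []" "length (std_r w) + length (std_s w) = length w" using std_basic[of w] by auto
  then have "length (std_r w) < length w" by (cases "std_s w") auto
  then show "((b, std_r w), b, w) \<in> measure (\<lambda>(b, w). length w)" by simp
qed auto

declare peel.simps[simp del]

lemma peel_stop:
  assumes "\<not> (2 \<le> length w \<and> even (length (std_s w)) \<and> bok b (std_s w))"
  shows "peel b w = (w, [])"
proof -
  have "peel b w = (if 2 \<le> length w \<and> even (length (std_s w)) \<and> bok b (std_s w)
     then (case peel b (std_r w) of (x, ps) \<Rightarrow> (x, ps @ [std_s w])) else (w, []))" by (rule peel.simps)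
  also have "\<dots> = (w, [])" using assms by (simp only: if_False)
  finally show ?thesis .
qed

lemma peel_step: "2 \<le> length w \<Longrightarrow> even (length (std_s w)) \<Longrightarrow> bok b (std_s w) \<Longrightarrow>
  peel b w = (fst (peel b (std_r w)), snd (peel b (std_r w)) @ [std_s w])"
  by (subst peel.simps) (simp add: case_prod_beta)

lemma even_ge2: "even (length w) \<Longrightarrow> w \<noteq> [] \<Longrightarrow> 2 \<le> length w"
proof -
  assume a: "even (length w)" "w \<noteq> []"
  then have "length w \<noteq> 0" by simp
  moreover have "length w \<noteq> 1" using a(1) by auto
  ultimately show ?thesis by linarith
qed

lemma peel_props:
  "lyndon w \<Longrightarrow> even (length w) \<Longrightarrow>
   w = fst (peel b w) @ concat (snd (peel b w)) \<and> lyndon (fst (peel b w)) \<and> even (length (fst (peel b w))) \<and>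
   2 \<le> length (fst (peel b w)) \<and> valid (snd (peel b w)) \<and>
   (\<forall>p\<in>set (snd (peel b w)). even (length p) \<and> bok b p) \<and>
   (snd (peel b w) \<noteq> [] \<longrightarrow> hd (snd (peel b w)) \<le> std_s (fst (peel b w)) \<and> last (snd (peel b w)) = std_s w) \<and>
   \<not> (even (length (std_s (fst (peel b w)))) \<and> bok b (std_s (fst (peel b w))))"
proof (induction b w rule: peel.induct)
  case (1 b w)
  have w2: "2 \<le> length w" using even_ge2 1(3) lyndon_nonempty[OF 1(2)] by blast
  show ?case
  proof (cases "even (length (std_s w)) \<and> bok b (std_s w)")
    case False
    then show ?thesis using peel_stop[of w b] 1(2,3) w2 by simp
  next
    case True
    let ?u = "std_r w" and ?v = "std_s w"
    have sb: "?u \<noteq> []" "?v \<noteq> []" "lyndon ?v" "length ?u + length ?v = length w" using std_basic[OF w2] by auto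
    have lu: "lyndon ?u" using std_r_lyndon[OF 1(2) w2] .
    have eu: "even (length ?u)" using sb(4) True 1(3) by (metis even_add)
    have u2: "2 \<le> length ?u" using even_ge2[OF eu sb(1)] .
    have IH: "?u = fst (peel b ?u) @ concat (snd (peel b ?u)) \<and> lyndon (fst (peel b ?u)) \<and> even (length (fst (peel b ?u))) \<and>
      2 \<le> length (fst (peel b ?u)) \<and> valid (snd (peel b ?u)) \<and>
      (\<forall>p\<in>set (snd (peel b ?u)). even (length p) \<and> bok b p) \<and>
      (snd (peel b ?u) \<noteq> [] \<longrightarrow> hd (snd (peel b ?u)) \<le> std_s (fst (peel b ?u)) \<and> last (snd (peel b ?u)) = std_s ?u) \<and>
      \<not> (even (length (std_s (fst (peel b ?u)))) \<and> bok b (std_s (fst (peel b ?u))))"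
      using 1(1)[OF _ lu eu] w2 True by blast
    obtain x ps where xps: "peel b ?u = (x, ps)" by (cases "peel b ?u") auto
    have pw: "peel b w = (x, ps @ [?v])" using peel_step[OF w2] True xps by simp
    have IH': "?u = x @ concat ps" "lyndon x" "even (length x)" "2 \<le> length x" "valid ps"
      "\<forall>p\<in>set ps. even (length p) \<and> bok b p"
      "ps \<noteq> [] \<Longrightarrow> hd ps \<le> std_s x \<and> last ps = std_s ?u"
      "\<not> (even (length (std_s x)) \<and> bok b (std_s x))"
      using IH xps by simp_all
    have vu: "?v \<le> std_s ?u" using StdA[OF 1(2) w2 u2] .
    have "valid (ps @ [?v])"
    proof -
      have "\<forall>p\<in>set ps. ?v \<le> p"
      proof
        fix p assume p: "p \<in> set ps"
        then have "ps \<noteq> []" by auto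
        then have "last ps \<le> p" using valid_last_le[OF IH'(5) _ p] by simp
        then show "?v \<le> p" using IH'(7)[OF \<open>ps \<noteq> []\<close>] vu by simp
      qed
      then show ?thesis using IH'(5) sb(3) by (simp add: valid_append)
    qed
    moreover have "w = x @ concat (ps @ [?v])" using std_rs[of w] IH'(1) by simp
    moreover have "hd (ps @ [?v]) \<le> std_s x"
    proof (cases "ps = []")
      case True
      then have "x = ?u" using IH'(1) by simp
      then show ?thesis using True vu by simp
    next
      case False
      then show ?thesis using IH'(7) by simp
    qed
    ultimately show ?thesis using pw IH' True by auto
  qed
qed


lemma peel_chain:
  assumes lx: "lyndon x" and x2: "2 \<le> length x" and ves: "valid es"
    and hdle: "es \<noteq> [] \<Longrightarrow> hd es \<le> std_s x"
    and chain: "\<forall>i<k. x @ concat (take i es) < es ! i" and kl: "k \<le> length es"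
    and ev: "\<forall>i<k. even (length (es ! i)) \<and> bok b (es ! i)"
    and stop: "\<not> (even (length (std_s x)) \<and> bok b (std_s x))"
  shows "peel b (x @ concat (take k es)) = (x, take k es) \<and> lyndon (x @ concat (take k es)) \<and>
    std_s (x @ concat (take k es)) = (if k = 0 then std_s x else es ! (k - 1))"
  using chain kl ev
proof (induction k)
  case 0
  have "peel b x = (x, [])" using stop by (intro peel_stop) simp
  then show ?case using lx by simp
next
  case (Suc k)
  let ?h = "x @ concat (take k es)" and ?e = "es ! k"
  have IH: "peel b ?h = (x, take k es)" "lyndon ?h" "std_s ?h = (if k = 0 then std_s x else es ! (k - 1))"
    using Suc by auto
  have kl: "k < length es" using Suc by simp
  have eq: "x @ concat (take (Suc k) es) = ?h @ ?e" using kl by (simp add: take_Suc_conv_app_nth)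
  have le: "?e \<in> set es" using kl by simp
  have lyn_e: "lyndon ?e" using valid_lyndon[OF ves le] .
  have he: "?h < ?e" using Suc.prems(1) by simp
  have h2: "2 \<le> length ?h" using x2 by simp
  have "?e \<le> std_s ?h"
  proof (cases k)
    case 0
    then have "es \<noteq> []" using kl by auto
    then have "?e \<le> hd es" using valid_hd_ge[OF ves le] by simp
    then show ?thesis using hdle[OF \<open>es \<noteq> []\<close>] IH(3) 0 by simp
  next
    case (Suc j)
    have "sorted_wrt (\<lambda>x y. y \<le> x) es" using ves by (simp add: valid_def)
    then have "es ! k \<le> es ! j" using kl Suc by (simp add: sorted_wrt_iff_nth_less)
    then show ?thesis using IH(3) Suc by simp
  qed
  then have std: "std_r (?h @ ?e) = ?h" "std_s (?h @ ?e) = ?e" using StdB[OF IH(2) lyn_e he] by auto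
  have ly: "lyndon (?h @ ?e)" using lyndon_app[OF IH(2) lyn_e he] .
  have evk: "even (length ?e) \<and> bok b ?e" using Suc.prems(3) by simp
  have "peel b (?h @ ?e) = (fst (peel b ?h), snd (peel b ?h) @ [?e])"
    using peel_step[of "?h @ ?e" b] std evk h2 by simp
  then have "peel b (?h @ ?e) = (x, take (Suc k) es)" using IH(1) kl by (simp add: take_Suc_conv_app_nth)
  then show ?case using eq std ly by simp
qed

definition phi :: "'a::linorder list \<times> 'a list \<Rightarrow> 'a list \<times> 'a list" where
  "phi z = (let os = lyndon_fact (fst z); es = lyndon_fact (snd z) in
     if os \<noteq> [] \<and> last os < hd es then (concat (butlast os) @ last os @ hd es, concat (tl es))
     else (let b = (if os = [] then None else Some (last os)); xp = peel b (hd es); x = fst xp;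
               E = concat (snd xp) @ concat (tl es) in
       if os \<noteq> [] \<and> last os \<le> std_s x then (concat (butlast os) @ x @ last os, E)
       else (fst z @ std_s x @ std_r x, E)))"


lemma phi_S:
  assumes "lyndon_fact O' = os" "lyndon_fact E' = es" "os \<noteq> []" "last os < hd es"
  shows "phi (O', E') = (concat (butlast os) @ last os @ hd es, concat (tl es))"
  using assms by (simp add: phi_def)

lemma phi_nonS:
  assumes "lyndon_fact O' = os" "lyndon_fact E' = es" "\<not> (os \<noteq> [] \<and> last os < hd es)"
    "peel (if os = [] then None else Some (last os)) (hd es) = (x, ps)"
  shows "phi (O', E') = (if os \<noteq> [] \<and> last os \<le> std_s x then (concat (butlast os) @ x @ last os, concat ps @ concat (tl es))
     else (O' @ std_s x @ std_r x, concat ps @ concat (tl es)))"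
  using assms unfolding phi_def Let_def by (simp only: fst_conv snd_conv if_False)

lemma merge_hd_chain:
  assumes "lyndon x" "valid es"
  obtains k where "k \<le> length es" "merge x es = (x @ concat (take k es)) # drop k es"
    "\<forall>i<k. x @ concat (take i es) < es ! i"
  using merge_struct[of es x] by blast

lemma nth_le_hd: "valid es \<Longrightarrow> i < length es \<Longrightarrow> es ! i \<le> hd es"
  using valid_hd_ge by (metis nth_mem)

lemma inverse:
  assumes g: "good (Ow, E)" and len: "2 \<le> length Ow"
  shows "phi (psi_step (Ow, E)) = (Ow, E)"
proof -
  define os where "os = lyndon_fact Ow"
  define es where "es = lyndon_fact E"
  have vos: "valid os" and cos: "concat os = Ow" and ves: "valid es" and ces: "concat es = E"
    using LF_props os_def es_def by auto
  have gl: "goodL os es" using g by (simp add: good_def os_def es_def)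
  have "os \<noteq> []" using len cos by auto
  then obtain pre om where osd: "os = pre @ [om]" by (cases os rule: rev_cases) auto
  have lom: "lyndon om" using vos osd by (simp add: valid_def)
  have vpre: "valid pre" using vos osd by (simp add: valid_append)
  have om_le: "\<And>f. f \<in> set pre \<Longrightarrow> om < f"
  proof -
    fix f assume f: "f \<in> set pre"
    then have "om \<le> f" using valid_snoc_le vos osd by blast
    moreover have "om \<noteq> f" using gl osd f by (auto simp: goodL_def)
    ultimately show "om < f" by simp
  qed
  have odd_om: "odd (length om)" using gl osd by (simp add: goodL_def)
  have odd_pre: "\<forall>f\<in>set pre. odd (length f)" using gl osd by (simp add: goodL_def)
  have dist_pre: "distinct pre" using gl osd by (simp add: goodL_def)
  have even_es: "\<forall>e\<in>set es. even (length e)" using gl by (simp add: goodL_def)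
  have c2a: "es \<noteq> [] \<Longrightarrow> f \<in> set pre \<Longrightarrow> hd es < f" for f using gl osd by (simp add: goodL_def)
  have c2b: "es \<noteq> [] \<Longrightarrow> 2 \<le> length om \<Longrightarrow> hd es \<le> std_s om" using gl osd by (simp add: goodL_def)
  have LFO: "lyndon_fact Ow = pre @ [om]" using os_def osd by simp
  have Oeq: "Ow = concat pre @ om" using cos osd by simp
  have one: "om \<noteq> []" using lom lyndon_nonempty by blast
  let ?sp = "2 \<le> length om \<and> (pre = [] \<or> std_s om < last pre)"
  let ?r = "std_r om" and ?s = "std_s om"
  show ?thesis
  proof (cases ?sp)
    case sp: True
    have len_om: "2 \<le> length om" using sp by simp
    have sb: "?r \<noteq> []" "?s \<noteq> []" "lyndon ?s" "length ?r + length ?s = length om"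
      using std_basic[OF len_om] by auto
    have lr: "lyndon ?r" using std_r_lyndon[OF lom len_om] .
    have ord: "?r < om" "om < ?s" "?r < ?s" using std_order[OF lom len_om] by auto
    have s_lt_pre: "\<And>f. f \<in> set pre \<Longrightarrow> ?s < f"
    proof -
      fix f assume f: "f \<in> set pre"
      then have "pre \<noteq> []" by auto
      then have "?s < last pre" using sp by simp
      also have "last pre \<le> f" using valid_last_le[OF vpre \<open>pre \<noteq> []\<close> f] .
      finally show "?s < f" .
    qed
    have oms: "om = ?r @ ?s" using std_rs[of om] by simp
    show ?thesis
    proof (cases "odd (length ?r)")
      case True
      have ps: "psi_step (Ow, E) = (concat pre @ ?r, ?s @ E)" using psi_S[OF len LFO] sp True by simp
      have v1: "valid (pre @ [?r])" using vpre lr om_le ord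
        by (auto simp: valid_append intro: order.strict_implies_order order.strict_trans)
      have "\<forall>g\<in>set es. g \<le> ?s"
      proof
        fix g assume g: "g \<in> set es"
        then have "es \<noteq> []" by auto
        then show "g \<le> ?s" using valid_hd_ge[OF ves g] c2b[OF _ len_om] by (meson order.trans)
      qed
      then have v2: "valid (?s # es)" using ves sb by (simp add: valid_Cons)
      have LF1: "lyndon_fact (concat pre @ ?r) = pre @ [?r]" using LF_concat[OF v1] by simp
      have LF2: "lyndon_fact (?s @ E) = ?s # es" using LF_concat[OF v2] ces by simp
      have "phi (concat pre @ ?r, ?s @ E) = (concat pre @ ?r @ ?s, concat es)"
        using phi_S[OF LF1 LF2] ord by simp
      then show ?thesis using ps Oeq std_rs[of om] ces by simp
    next
      case False
      have ps: "psi_step (Ow, E) = (concat pre @ ?s, ?r @ E)" using psi_P[OF len LFO] sp False by simp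
      have v1: "valid (pre @ [?s])" using vpre sb s_lt_pre by (auto simp: valid_append intro: less_imp_le)
      have vm: "valid (merge ?r es) \<and> concat (merge ?r es) = ?r @ E" using merge_props[OF lr ves] ces by simp
      have LF1: "lyndon_fact (concat pre @ ?s) = pre @ [?s]" using LF_concat[OF v1] by simp
      have LF2: "lyndon_fact (?r @ E) = merge ?r es" using LF_concat[of "merge ?r es"] vm by simp
      have "length ?r + length ?s = length om" using sb by simp
      then have odd_s: "odd (length ?s)" using odd_om False by (metis even_add)
      have hes: "es \<noteq> [] \<Longrightarrow> hd es < ?s"
      proof -
        assume ne: "es \<noteq> []"
        have "hd es \<le> ?s" using c2b[OF ne len_om] .
        moreover have "hd es \<noteq> ?s" using even_es ne odd_s by (metis hd_in_set)
        ultimately show "hd es < ?s" by simp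
      qed
      have rE: "?r @ E < ?s"
      proof (cases "es = []")
        case True then show ?thesis using ces ord by simp
      next
        case False
        then have "E < ?s" using H2[OF _ ves False] hes sb ces by simp
        then show ?thesis using lyndon_app_less_suffix[of ?s ?r E] sb ord by simp
      qed
      have mne: "merge ?r es \<noteq> []" using vm sb by auto
      have hs: "hd (merge ?r es) < ?s" using H1[OF _ mne] vm rE by simp
      obtain k where k: "k \<le> length es" "merge ?r es = (?r @ concat (take k es)) # drop k es"
        "\<forall>i<k. ?r @ concat (take i es) < es ! i" using merge_hd_chain[OF lr ves] by blast
      have r2: "2 \<le> length ?r" using even_ge2[of ?r] False sb by simp
      have sr: "?s \<le> std_s ?r" using StdA[OF lom len_om r2] .
      have pc: "peel (Some ?s) (?r @ concat (take k es)) = (?r, take k es)"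
      proof -
        have "\<forall>i<k. even (length (es ! i)) \<and> bok (Some ?s) (es ! i)"
        proof (intro allI impI)
          fix i assume i: "i < k"
          then have il: "i < length es" using k(1) by simp
          then have ne: "es \<noteq> []" by auto
          have "es ! i \<le> hd es" using nth_le_hd[OF ves il] .
          then have "es ! i < ?s" using hes[OF ne] by simp
          then show "even (length (es ! i)) \<and> bok (Some ?s) (es ! i)" using even_es il by simp
        qed
        moreover have "es \<noteq> [] \<Longrightarrow> hd es \<le> std_s ?r" using hes sr by (meson less_imp_le order.trans)
        moreover have "\<not> (even (length (std_s ?r)) \<and> bok (Some ?s) (std_s ?r))" using sr by (simp add: leD)
        ultimately show ?thesis using peel_chain[OF lr r2 ves _ k(3) k(1)] by blast
      qed
      have nS: "\<not> (pre @ [?s] \<noteq> [] \<and> last (pre @ [?s]) < hd (merge ?r es))" using hs by simp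
      have "phi (concat pre @ ?s, ?r @ E) = (concat pre @ ?r @ ?s, concat (take k es) @ concat (tl (merge ?r es)))"
        using phi_nonS[OF LF1 LF2 nS, of ?r "take k es"] pc k(2) sr by simp
      also have "\<dots> = (Ow, E)" using Oeq std_rs[of om] ces k(2)
        by (simp flip: concat_append)
      finally show ?thesis using ps by simp
    qed
  next
    case nsp: False
    have "pre \<noteq> []" using nsp len Oeq by auto
    then obtain pre2 a where pd: "pre = pre2 @ [a]" by (cases pre rule: rev_cases) auto
    have ps: "psi_step (Ow, E) = (concat pre2, om @ a @ E)" using psi_F[OF len LFO nsp] pd by simp
    have la: "lyndon a" using vpre pd by (simp add: valid_def)
    have oa: "om < a" using om_le pd by simp
    have lx: "lyndon (om @ a)" using lyndon_app[OF lom la oa] .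
    have vpre2: "valid pre2" using vpre pd by (simp add: valid_append)
    have a_lt: "\<And>f. f \<in> set pre2 \<Longrightarrow> a < f"
    proof -
      fix f assume f: "f \<in> set pre2"
      have "a \<le> f" using vpre pd f by (simp add: valid_append)
      moreover have "a \<noteq> f" using dist_pre pd f by auto
      ultimately show "a < f" by simp
    qed
    have std: "std_r (om @ a) = om" "std_s (om @ a) = a"
    proof -
      have "2 \<le> length om \<Longrightarrow> a \<le> std_s om" using nsp pd by auto
      moreover have "\<not> 2 \<le> length om \<Longrightarrow> length om = 1" using one by (cases om) (auto simp: Suc_le_eq)
      ultimately have "length om = 1 \<or> a \<le> std_s om" by blast
      then show "std_r (om @ a) = om" "std_s (om @ a) = a" using StdB[OF lom la oa] by auto
    qed
    have vm: "valid (merge (om @ a) es) \<and> concat (merge (om @ a) es) = om @ a @ E" using merge_props[OF lx ves] ces by simp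
    have LF1: "lyndon_fact (concat pre2) = pre2" using LF_concat[OF vpre2] .
    have LF2: "lyndon_fact (om @ a @ E) = merge (om @ a) es" using LF_concat[of "merge (om @ a) es"] vm by simp
    have mne: "merge (om @ a) es \<noteq> []" using vm one by auto
    have hs: "hd (merge (om @ a) es) < a" using H1[OF _ mne] vm lyndon_app_less_right[OF la oa one] by simp
    have odd_a: "odd (length a)" using odd_pre pd by simp
    have hes: "es \<noteq> [] \<Longrightarrow> hd es < a" using c2a pd by simp
    obtain k where k: "k \<le> length es" "merge (om @ a) es = ((om @ a) @ concat (take k es)) # drop k es"
      "\<forall>i<k. (om @ a) @ concat (take i es) < es ! i" by (rule merge_hd_chain[OF lx ves])
    define b where "b = (if pre2 = [] then None else Some (last pre2))"
    have "a \<noteq> []" using la lyndon_nonempty by blast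
    then have "0 < length a" "0 < length om" using one by auto
    then have x2: "2 \<le> length (om @ a)" unfolding length_append by linarith
    have bok_a: "\<And>v. v < a \<Longrightarrow> bok b v"
    proof -
      fix v assume "v < a"
      show "bok b v"
      proof (cases "pre2 = []")
        case True then show ?thesis by (simp add: b_def)
      next
        case False
        then have "a < last pre2" using a_lt by simp
        then show ?thesis using \<open>v < a\<close> False by (simp add: b_def)
      qed
    qed
    have pc: "peel b ((om @ a) @ concat (take k es)) = (om @ a, take k es)"
    proof -
      have "\<forall>i<k. even (length (es ! i)) \<and> bok b (es ! i)"
      proof (intro allI impI)
        fix i assume i: "i < k"
        then have il: "i < length es" using k(1) by simp
        then have ne: "es \<noteq> []" by auto
        have "es ! i \<le> hd es" using nth_le_hd[OF ves il] .
        then have "es ! i < a" using hes[OF ne] by simp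
        then show "even (length (es ! i)) \<and> bok b (es ! i)" using even_es il bok_a by simp
      qed
      moreover have "es \<noteq> [] \<Longrightarrow> hd es \<le> std_s (om @ a)" using hes std by simp
      moreover have "\<not> (even (length (std_s (om @ a))) \<and> bok b (std_s (om @ a)))" using std odd_a by simp
      ultimately show ?thesis using peel_chain[OF lx x2 ves _ k(3) k(1)] by blast
    qed
    have nS: "\<not> (pre2 \<noteq> [] \<and> last pre2 < hd (merge (om @ a) es))"
    proof
      assume "pre2 \<noteq> [] \<and> last pre2 < hd (merge (om @ a) es)"
      then have "a < last pre2" "last pre2 < hd (merge (om @ a) es)" using a_lt by auto
      then show False using hs by simp
    qed
    have pc': "peel (if pre2 = [] then None else Some (last pre2)) (hd (merge (om @ a) es)) = (om @ a, take k es)"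
      using pc k(2) by (simp add: b_def)
    have nP: "\<not> (pre2 \<noteq> [] \<and> last pre2 \<le> std_s (om @ a))"
    proof
      assume as: "pre2 \<noteq> [] \<and> last pre2 \<le> std_s (om @ a)"
      then have "a < last pre2" using a_lt by simp
      moreover have "last pre2 \<le> a" using as std by simp
      ultimately show False by order
    qed
    have "phi (concat pre2, om @ a @ E) = (concat pre2 @ a @ om, concat (take k es) @ concat (tl (merge (om @ a) es)))"
      using phi_nonS[OF LF1 LF2 nS pc', unfolded if_not_P[OF nP]] std by simp
    also have "\<dots> = (Ow, E)"
    proof -
      have "concat (take k es) @ concat (tl (merge (om @ a) es)) = E" using k(2) ces by (simp flip: concat_append)
      moreover have "concat pre2 @ a @ om = Ow" using Oeq pd by simp
      ultimately show ?thesis by simp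
    qed
    finally show ?thesis using ps by simp
  qed
qed


lemma surj_step:
  assumes g: "good (O', E')" and ne: "E' \<noteq> []"
  shows "good (phi (O', E')) \<and> 2 \<le> length (fst (phi (O', E'))) \<and> psi_step (phi (O', E')) = (O', E')"
proof -
  define os where "os = lyndon_fact O'"
  define es where "es = lyndon_fact E'"
  have vos: "valid os" and cos: "concat os = O'" and ves: "valid es" and ces: "concat es = E'"
    using LF_props os_def es_def by auto
  have gl: "goodL os es" using g by (simp add: good_def os_def es_def)
  have esne: "es \<noteq> []" using ne ces by auto
  define e where "e = hd es"
  have le: "lyndon e" using ves esne by (simp add: e_def valid_def)
  have ene: "e \<noteq> []" using le lyndon_nonempty by blast
  have eve: "even (length e)" using gl esne by (simp add: goodL_def e_def)
  have e2: "2 \<le> length e" using even_ge2[OF eve ene] .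
  have Eeq: "E' = e @ concat (tl es)" using ces esne by (cases es) (auto simp: e_def)
  have vtl: "valid (tl es)" using ves by (cases es) (auto simp: valid_Cons)
  have LFtl: "lyndon_fact (concat (tl es)) = tl es" using LF_concat[OF vtl] .
  have tl_le: "\<And>g. g \<in> set (tl es) \<Longrightarrow> g \<le> e" using ves esne by (cases es) (auto simp: valid_Cons e_def)
  have tl_even: "\<forall>g\<in>set (tl es). even (length g)" using gl by (cases es) (auto simp: goodL_def)
  have odd_os: "\<forall>f\<in>set os. odd (length f)" using gl by (simp add: goodL_def)
  have dist_os: "distinct os" using gl by (simp add: goodL_def)
  have c2a: "\<And>q. q \<in> set (butlast os) \<Longrightarrow> e < q" using gl esne by (simp add: goodL_def e_def)
  have c2b: "os \<noteq> [] \<Longrightarrow> 2 \<le> length (last os) \<Longrightarrow> e \<le> std_s (last os)" using gl esne by (simp add: goodL_def e_def)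
  show ?thesis
  proof (cases "os \<noteq> [] \<and> last os < e")
    case S: True
    then obtain pre o1 where osd: "os = pre @ [o1]" by (cases os rule: rev_cases) auto
    have lo: "lyndon o1" using vos osd by (simp add: valid_def)
    have one: "o1 \<noteq> []" using lo lyndon_nonempty by blast
    have oe: "o1 < e" using S osd by simp
    have vpre: "valid pre" using vos osd by (simp add: valid_append)
    have o_lt: "\<And>f. f \<in> set pre \<Longrightarrow> o1 < f"
    proof -
      fix f assume f: "f \<in> set pre"
      have "o1 \<le> f" using vos osd f by (simp add: valid_append)
      moreover have "o1 \<noteq> f" using dist_os osd f by auto
      ultimately show "o1 < f" by simp
    qed
    have e_lt: "\<And>f. f \<in> set pre \<Longrightarrow> e < f" using c2a osd by simp
    have loe: "lyndon (o1 @ e)" using lyndon_app[OF lo le oe] .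
    have oe_lt: "\<And>f. f \<in> set pre \<Longrightarrow> o1 @ e < f"
      using lyndon_app_less_suffix o_lt e_lt valid_lyndon[OF vpre] by blast
    have v1: "valid (pre @ [o1 @ e])" using vpre loe oe_lt by (auto simp: valid_append intro: less_imp_le)
    have LF1: "lyndon_fact (concat pre @ o1 @ e) = pre @ [o1 @ e]" using LF_concat[OF v1] by simp
    have phiS: "phi (O', E') = (concat pre @ o1 @ e, concat (tl es))"
      using phi_S[OF os_def[symmetric] es_def[symmetric]] S osd by (simp add: e_def)
    have stdc: "length o1 = 1 \<or> e \<le> std_s o1"
    proof (cases "2 \<le> length o1")
      case True then show ?thesis using c2b osd by simp
    next
      case False then show ?thesis using one by (cases o1) (auto simp: Suc_le_eq)
    qed
    have std: "std_r (o1 @ e) = o1" "std_s (o1 @ e) = e" using StdB[OF lo le oe stdc] by auto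
    have lenO: "2 \<le> length (concat pre @ o1 @ e)" using one ene by (cases o1; cases e) auto
    have odd_o: "odd (length o1)" using odd_os osd by simp
    have sp: "pre = [] \<or> e < last pre" using e_lt by (cases pre rule: rev_cases) auto
    have "psi_step (concat pre @ o1 @ e, concat (tl es)) = (concat pre @ o1, e @ concat (tl es))"
      using psi_S[OF lenO LF1, of "concat (tl es)"] std sp odd_o e2 by simp
    then have ps: "psi_step (phi (O', E')) = (O', E')" using phiS cos osd Eeq by simp
    have "goodL (pre @ [o1 @ e]) (tl es)"
      unfolding goodL_def
    proof (intro conjI impI ballI)
      show "odd (length f)" if "f \<in> set (pre @ [o1 @ e])" for f
        using that odd_os osd eve by auto
      show "distinct (pre @ [o1 @ e])" using dist_os osd oe_lt by auto
      show "even (length g)" if "g \<in> set (tl es)" for g using that tl_even by simp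
      show "hd (tl es) < q" if "tl es \<noteq> []" "q \<in> set (butlast (pre @ [o1 @ e]))" for q
        using that tl_le[of "hd (tl es)"] e_lt[of q] by (simp add: order.strict_trans1)
      show "hd (tl es) \<le> std_s (last (pre @ [o1 @ e]))" if "tl es \<noteq> []" for dummy
        using that tl_le[of "hd (tl es)"] std by simp
    qed
    then have "good (phi (O', E'))" using phiS LF1 LFtl by (simp add: good_def)
    then show ?thesis using ps phiS lenO by simp
  next
    case nS: False
    define b where "b = (if os = [] then None else Some (last os))"
    obtain x ps where xps: "peel b e = (x, ps)" by (cases "peel b e") auto
    have PP: "e = x @ concat ps" "lyndon x" "even (length x)" "2 \<le> length x" "valid ps"
      "\<forall>p\<in>set ps. even (length p) \<and> bok b p"
      "ps \<noteq> [] \<Longrightarrow> hd ps \<le> std_s x \<and> last ps = std_s e"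
      "\<not> (even (length (std_s x)) \<and> bok b (std_s x))"
      using peel_props[OF le eve, of b] xps by simp_all
    have phiN: "phi (O', E') = (if os \<noteq> [] \<and> last os \<le> std_s x then (concat (butlast os) @ x @ last os, concat ps @ concat (tl es))
     else (O' @ std_s x @ std_r x, concat ps @ concat (tl es)))"
      using phi_nonS[OF os_def[symmetric] es_def[symmetric], of x ps] nS xps by (simp add: e_def b_def)
    have e_lt_last: "os \<noteq> [] \<Longrightarrow> e < last os"
    proof -
      assume "os \<noteq> []"
      then have "e \<le> last os" using nS by simp
      moreover have "e \<noteq> last os" using odd_os eve \<open>os \<noteq> []\<close> by (metis last_in_set)
      ultimately show "e < last os" by simp
    qed
    have xe: "x \<le> e" using PP(1) le_append by metis
    have es_se: "e < std_s e" using std_order[OF le e2] by simp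
    have vE: "valid (ps @ tl es)"
    proof -
      have "\<forall>p\<in>set ps. \<forall>g\<in>set (tl es). g \<le> p"
      proof (intro ballI)
        fix p g assume p: "p \<in> set ps" and g: "g \<in> set (tl es)"
        then have "ps \<noteq> []" by auto
        have "last ps \<le> p" using valid_last_le[OF PP(5) \<open>ps \<noteq> []\<close> p] .
        then have "std_s e \<le> p" using PP(7)[OF \<open>ps \<noteq> []\<close>] by simp
        then show "g \<le> p" using tl_le[OF g] es_se by simp
      qed
      then show ?thesis using PP(5) vtl by (simp add: valid_append)
    qed
    have LFE: "lyndon_fact (concat ps @ concat (tl es)) = ps @ tl es" using LF_concat[OF vE] by simp
    have E'eq: "x @ concat ps @ concat (tl es) = E'" using Eeq PP(1) by simp
    have evE: "\<forall>g\<in>set (ps @ tl es). even (length g)" using PP(6) tl_even by auto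
    show ?thesis
    proof (cases "os \<noteq> [] \<and> last os \<le> std_s x")
      case P: True
      then obtain pre s where osd: "os = pre @ [s]" by (cases os rule: rev_cases) auto
      have ls: "lyndon s" using vos osd by (simp add: valid_def)
      have sne: "s \<noteq> []" using ls lyndon_nonempty by blast
      have xs: "x < s" using xe e_lt_last osd by simp
      have sx: "s \<le> std_s x" using P osd by simp
      have vpre: "valid pre" using vos osd by (simp add: valid_append)
      have s_lt: "\<And>f. f \<in> set pre \<Longrightarrow> s < f"
      proof -
        fix f assume f: "f \<in> set pre"
        have "s \<le> f" using vos osd f by (simp add: valid_append)
        moreover have "s \<noteq> f" using dist_os osd f by auto
        ultimately show "s < f" by simp
      qed
      have lxs: "lyndon (x @ s)" using lyndon_app[OF PP(2) ls xs] .
      have xne: "x \<noteq> []" using PP(2) lyndon_nonempty by blast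
      have xs_s: "x @ s < s" using lyndon_suffix[OF lxs refl xne sne] .
      have xs_lt: "\<And>f. f \<in> set pre \<Longrightarrow> x @ s < f" using xs_s s_lt by (meson order.strict_trans)
      have v1: "valid (pre @ [x @ s])" using vpre lxs xs_lt by (auto simp: valid_append intro: less_imp_le)
      have LF1: "lyndon_fact (concat pre @ x @ s) = pre @ [x @ s]" using LF_concat[OF v1] by simp
      have phiP: "phi (O', E') = (concat pre @ x @ s, concat ps @ concat (tl es))" using phiN P osd by simp
      have std: "std_r (x @ s) = x" "std_s (x @ s) = s" using StdB[OF PP(2) ls xs] sx by auto
      have lenO: "2 \<le> length (concat pre @ x @ s)" using PP(4) by simp
      have sp: "pre = [] \<or> s < last pre" using s_lt by (cases pre rule: rev_cases) auto
      have "psi_step (concat pre @ x @ s, concat ps @ concat (tl es)) = (concat pre @ s, x @ concat ps @ concat (tl es))"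
      proof -
        have "2 \<le> length (x @ s)" using PP(4) by simp
        then show ?thesis using psi_P[OF lenO LF1] std sp PP(3) by simp
      qed
      then have ps: "psi_step (phi (O', E')) = (O', E')" using phiP cos osd E'eq by simp
      have odd_s: "odd (length s)" using odd_os osd by simp
      have h_lt_s: "ps @ tl es \<noteq> [] \<Longrightarrow> hd (ps @ tl es) < s"
      proof (cases "ps = []")
        case True
        assume "ps @ tl es \<noteq> []"
        then have "hd (tl es) \<le> e" using tl_le True by simp
        then show ?thesis using True e_lt_last osd by simp
      next
        case False
        then have "bok b (hd ps)" using PP(6) by simp
        then show ?thesis using False osd by (simp add: b_def)
      qed
      have "goodL (pre @ [x @ s]) (ps @ tl es)"
        unfolding goodL_def
      proof (intro conjI impI ballI)
        show "odd (length f)" if "f \<in> set (pre @ [x @ s])" for f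
          using that odd_os osd PP(3) odd_s by auto
        show "distinct (pre @ [x @ s])" using dist_os osd xs_lt by auto
        show "even (length g)" if "g \<in> set (ps @ tl es)" for g using that evE by simp
        show "hd (ps @ tl es) < q" if "ps @ tl es \<noteq> []" "q \<in> set (butlast (pre @ [x @ s]))" for q
        proof -
          have "q \<in> set pre" using that(2) by simp
          then show ?thesis using h_lt_s[OF that(1)] s_lt[of q] by (meson order.strict_trans)
        qed
        show "hd (ps @ tl es) \<le> std_s (last (pre @ [x @ s]))" if "ps @ tl es \<noteq> []" for dummy
          using that h_lt_s std by simp
      qed
      then have "good (phi (O', E'))" using phiP LF1 LFE by (simp add: good_def)
      then show ?thesis using ps phiP lenO by simp
    next
      case F: False
      let ?a = "std_s x" and ?om = "std_r x"
      have phiF: "phi (O', E') = (O' @ ?a @ ?om, concat ps @ concat (tl es))" using phiN F by simp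
      have sb: "?om \<noteq> []" "?a \<noteq> []" "lyndon ?a" "length ?om + length ?a = length x"
        using std_basic[OF PP(4)] by auto
      have lom: "lyndon ?om" using std_r_lyndon[OF PP(2) PP(4)] .
      have oa: "?om < ?a" using std_order[OF PP(2) PP(4)] by simp
      have bok_a: "bok b ?a"
      proof (cases "os = []")
        case True then show ?thesis by (simp add: b_def)
      next
        case False
        then show ?thesis using F by (simp add: b_def)
      qed
      have odd_a: "odd (length ?a)" using PP(8) bok_a by simp
      have odd_om: "odd (length ?om)" using sb(4) PP(3) odd_a by (metis even_add)
      have a_lt: "\<And>f. f \<in> set os \<Longrightarrow> ?a < f"
      proof -
        fix f assume f: "f \<in> set os"
        then have "os \<noteq> []" by auto
        then have "?a < last os" using F by simp
        also have "last os \<le> f" using valid_last_le[OF vos \<open>os \<noteq> []\<close> f] .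
        finally show "?a < f" .
      qed
      have v1: "valid (os @ [?a, ?om])" using vos sb lom oa a_lt
        by (auto simp: valid_append valid_Cons intro: less_imp_le order.strict_implies_order order.strict_trans)
      have LF1: "lyndon_fact (O' @ ?a @ ?om) = (os @ [?a]) @ [?om]" using LF_concat[OF v1] cos by simp
      have lenO: "2 \<le> length (O' @ ?a @ ?om)" using sb by (cases ?a; cases ?om) auto
      have nsp: "\<not> (2 \<le> length ?om \<and> (os @ [?a] = [] \<or> std_s ?om < last (os @ [?a])))"
      proof
        assume as: "2 \<le> length ?om \<and> (os @ [?a] = [] \<or> std_s ?om < last (os @ [?a]))"
        then have "?a \<le> std_s ?om" using StdA[OF PP(2) PP(4)] by simp
        moreover have "std_s ?om < ?a" using as by simp
        ultimately show False by simp
      qed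
      have "psi_step (O' @ ?a @ ?om, concat ps @ concat (tl es)) = (concat os, ?om @ ?a @ concat ps @ concat (tl es))"
        using psi_F[OF lenO LF1 nsp] by simp
      also have "\<dots> = (O', E')"
      proof -
        have "?om @ ?a @ concat ps @ concat (tl es) = (?om @ ?a) @ concat ps @ concat (tl es)" by simp
        also have "\<dots> = x @ concat ps @ concat (tl es)" by (simp only: std_rs)
        finally show ?thesis using cos E'eq by simp
      qed
      finally have ps: "psi_step (phi (O', E')) = (O', E')" using phiF by simp
      have h_lt_a: "ps @ tl es \<noteq> [] \<Longrightarrow> hd (ps @ tl es) < ?a"
      proof (cases "ps = []")
        case True
        assume "ps @ tl es \<noteq> []"
        then have "hd (tl es) \<le> e" using tl_le True by simp
        moreover have "x = e" using PP(1) True by simp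
        ultimately show ?thesis using True es_se by simp
      next
        case False
        then have "hd ps \<le> ?a" using PP(7) by simp
        moreover have "hd ps \<noteq> ?a" using PP(6) False odd_a by (metis hd_in_set)
        ultimately show ?thesis using False by simp
      qed
      have "goodL (os @ [?a, ?om]) (ps @ tl es)"
        unfolding goodL_def
      proof (intro conjI impI ballI)
        show "odd (length f)" if "f \<in> set (os @ [?a, ?om])" for f
          using that odd_os odd_a odd_om by auto
        show "distinct (os @ [?a, ?om])" using dist_os a_lt oa
          by (auto dest: order.strict_trans)
        show "even (length g)" if "g \<in> set (ps @ tl es)" for g using that evE by simp
        show "hd (ps @ tl es) < q" if "ps @ tl es \<noteq> []" "q \<in> set (butlast (os @ [?a, ?om]))" for q
        proof -
          have "q \<in> set os \<or> q = ?a" using that(2) by (auto simp: butlast_append)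
          then show ?thesis using h_lt_a[OF that(1)] a_lt by (meson order.strict_trans)
        qed
        show "hd (ps @ tl es) \<le> std_s (last (os @ [?a, ?om]))"
          if "ps @ tl es \<noteq> []" "os @ [?a, ?om] \<noteq> [] \<and> 2 \<le> length (last (os @ [?a, ?om]))"
        proof -
          have "?a \<le> std_s ?om" using StdA[OF PP(2) PP(4)] that(2) by simp
          then show ?thesis using h_lt_a[OF that(1)] by simp
        qed
      qed
      then have "good (phi (O', E'))" using phiF LF1 LFE by (simp add: good_def)
      then show ?thesis using ps phiF lenO by simp
    qed
  qed
qed


lemma valid_eq_mset: "valid xs \<Longrightarrow> valid ys \<Longrightarrow> mset xs = mset ys \<Longrightarrow> xs = ys"
proof -
  assume a: "valid xs" "valid ys" "mset xs = mset ys"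
  have s1: "sorted (rev xs)" using a(1) by (simp add: valid_def sorted_wrt_rev)
  have s2: "sorted (rev ys)" using a(2) by (simp add: valid_def sorted_wrt_rev)
  have "sort (rev xs) = rev ys" using properties_for_sort[of "rev ys" "rev xs"] a(3) s2 by simp
  moreover have "sort (rev xs) = rev xs" using sorted_sort_id[OF s1] .
  ultimately show ?thesis by simp
qed

lemma valid_filter: "valid xs \<Longrightarrow> valid (filter P xs)"
  by (simp add: valid_def sorted_wrt_filter)

lemma mset_filter_split: "mset (filter P xs) + mset (filter (\<lambda>x. \<not> P x) xs) = mset xs"
  by (induction xs) auto

lemma mset_concat_filter_split:
  "mset (concat (filter P xs)) + mset (concat (filter (\<lambda>x. \<not> P x) xs)) = mset (concat xs)"
  by (induction xs) (auto simp: ac_simps)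

definition Lc :: "'a::linorder \<Rightarrow> 'a list list \<Rightarrow> 'a list list" where
  "Lc c es = filter (\<lambda>e. \<not> e < [c]) es @ [[c]] @ filter (\<lambda>e. e < [c]) es"

lemma insert_letter_Lc: "insert_letter c E = concat (Lc c (lyndon_fact E))"
  by (simp add: insert_letter_def Lc_def Let_def)

lemma Lc_valid: "valid es \<Longrightarrow> valid (Lc c es)"
  unfolding Lc_def using valid_filter[of es]
  by (auto simp: valid_append valid_Cons intro: order.strict_implies_order dest: leI)

lemma Lc_mset: "mset (Lc c es) = mset es + {#[c]#}"
  using mset_filter_split[of "\<lambda>e. \<not> e < [c]" es] by (simp add: Lc_def ac_simps)

lemma Lc_concat_mset: "mset (concat (Lc c es)) = mset (concat es) + {#c#}"
  using mset_concat_filter_split[of "\<lambda>e. \<not> e < [c]" es] by (simp add: Lc_def ac_simps)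

lemma psi_fix: "length (fst z) < 2 \<Longrightarrow> psi_step z = z"
  by (cases z) (simp add: psi_step_def)

lemma good_iter:
  "good z \<Longrightarrow> good ((psi_step ^^ k) z) \<and>
     mset (fst ((psi_step ^^ k) z) @ snd ((psi_step ^^ k) z)) = mset (fst z @ snd z)"
proof (induction k)
  case 0 then show ?case by simp
next
  case (Suc k)
  obtain Ow E where y: "(psi_step ^^ k) z = (Ow, E)" by (cases "(psi_step ^^ k) z") auto
  have gy: "good (Ow, E)" and my: "mset (Ow @ E) = mset (fst z @ snd z)" using Suc y by auto
  show ?case
  proof (cases "length Ow < 2")
    case True
    then show ?thesis using psi_fix[of "(Ow, E)"] y gy my by simp
  next
    case False
    then show ?thesis using forward[OF gy] y my by simp
  qed
qed

lemma len_iter: "good z \<Longrightarrow> length (fst ((psi_step ^^ k) z)) \<le> max 1 (length (fst z) - k)"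
proof (induction k)
  case 0 then show ?case by simp
next
  case (Suc k)
  obtain Ow E where y: "(psi_step ^^ k) z = (Ow, E)" by (cases "(psi_step ^^ k) z") auto
  have gy: "good (Ow, E)" using good_iter[OF Suc.prems, of k] y by simp
  show ?case
  proof (cases "length Ow < 2")
    case True
    then show ?thesis using psi_fix[of "(Ow, E)"] y by simp
  next
    case False
    then have "length (fst (psi_step (Ow, E))) < length Ow" using forward[OF gy] by simp
    moreover have "length Ow \<le> max 1 (length (fst z) - k)" using Suc y by simp
    ultimately show ?thesis using y False by simp
  qed
qed

lemma final_iter: "good z \<Longrightarrow> length (fst z) \<le> k \<Longrightarrow> length (fst ((psi_step ^^ k) z)) < 2"
  using len_iter[of z k] by simp

lemma stable_iter: "length (fst ((psi_step ^^ j) z)) < 2 \<Longrightarrow> j \<le> m \<Longrightarrow> (psi_step ^^ m) z = (psi_step ^^ j) z"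
proof (induction m)
  case 0 then show ?case by simp
next
  case (Suc m)
  show ?case
  proof (cases "j = Suc m")
    case True then show ?thesis by simp
  next
    case False
    then have "(psi_step ^^ m) z = (psi_step ^^ j) z" using Suc by simp
    then show ?thesis using psi_fix[OF Suc.prems(1)] by simp
  qed
qed

fun backw :: "nat \<Rightarrow> 'a::linorder list \<times> 'a list \<Rightarrow> 'a list \<times> 'a list" where
  "backw 0 y = y"
| "backw (Suc n) y = (if snd y = [] then y else backw n (phi y))"

lemma back_iter: "good z \<Longrightarrow> snd z = [] \<Longrightarrow> k \<le> N \<Longrightarrow> backw N ((psi_step ^^ k) z) = z"
proof (induction k arbitrary: N)
  case 0 then show ?case by (cases N) auto
next
  case (Suc k)
  then obtain N' where N: "N = Suc N'" "k \<le> N'" by (cases N) auto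
  obtain Ow E where y: "(psi_step ^^ k) z = (Ow, E)" by (cases "(psi_step ^^ k) z") auto
  have gy: "good (Ow, E)" using good_iter[OF Suc.prems(1), of k] y by simp
  show ?case
  proof (cases "length Ow < 2")
    case True
    then have "(psi_step ^^ Suc k) z = (Ow, E)" using psi_fix[of "(Ow, E)"] y by simp
    then show ?thesis using Suc.IH[OF Suc.prems(1,2), of N] Suc.prems(3) y by simp
  next
    case False
    then have f: "snd (psi_step (Ow, E)) \<noteq> []" using forward[OF gy] by simp
    have i: "phi (psi_step (Ow, E)) = (Ow, E)" using inverse[OF gy] False by simp
    have "backw N ((psi_step ^^ Suc k) z) = backw N' (Ow, E)" using N f i y by simp
    then show ?thesis using Suc.IH[OF Suc.prems(1,2) N(2)] y by simp
  qed
qed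

lemma reach:
  "good y \<Longrightarrow> \<exists>z k. good z \<and> snd z = [] \<and> (psi_step ^^ k) z = y \<and> mset (fst z @ snd z) = mset (fst y @ snd y)"
proof (induction "length (snd y)" arbitrary: y rule: less_induct)
  case less
  obtain O' E' where y: "y = (O', E')" by (cases y) auto
  show ?case
  proof (cases "E' = []")
    case True
    then show ?thesis using less.prems y by (intro exI[of _ y] exI[of _ 0]) simp
  next
    case False
    have gy: "good (O', E')" using less.prems y by simp
    have s: "good (phi (O', E'))" "2 \<le> length (fst (phi (O', E')))" "psi_step (phi (O', E')) = (O', E')"
      using surj_step[OF gy False] by auto
    obtain Ox Ex where x: "phi (O', E') = (Ox, Ex)" by (cases "phi (O', E')") auto
    have fw: "mset (O' @ E') = mset (Ox @ Ex)" "length O' < length Ox"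
      using forward[of Ox Ex] s x by auto
    have "length (O' @ E') = length (Ox @ Ex)" using arg_cong[OF fw(1), of size] by simp
    then have "length Ex < length E'" using fw(2) by simp
    then obtain z k where zk: "good z" "snd z = []" "(psi_step ^^ k) z = (Ox, Ex)" "mset (fst z @ snd z) = mset (Ox @ Ex)"
      using less.hyps[of "(Ox, Ex)"] y s(1) x by auto
    have "(psi_step ^^ Suc k) z = y" using zk(3) s(3) x y by simp
    then show ?thesis using zk fw(1) y by (intro exI[of _ z] exI[of _ "Suc k"]) simp
  qed
qed

definition dec :: "'a::linorder list \<times> 'a list \<Rightarrow> 'a list" where
  "dec y = (case y of (Ow, Ew) \<Rightarrow> if Ow = [] then Ew else insert_letter (hd Ow) Ew)"

lemma Psi_dec: "Psi w = dec ((psi_step ^^ length w) (w, []))"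
  by (simp add: Psi_def dec_def)

lemma final_cases: "length Ow < 2 \<Longrightarrow> Ow = [] \<or> (\<exists>c. Ow = [c])"
  by (cases Ow) auto

lemma good_even: "good (Ow, E) \<Longrightarrow> \<forall>e\<in>set (lyndon_fact E). even (length e)"
  by (simp add: good_def goodL_def)

lemma dec_single:
  assumes "good ([c], E)"
  shows "lyndon_fact (dec ([c], E)) = Lc c (lyndon_fact E)"
  using LF_concat[OF Lc_valid[OF LF_valid[of E]], of c] by (simp add: dec_def insert_letter_Lc)

lemma filter_odd_Lc: "\<forall>e\<in>set es. even (length e) \<Longrightarrow> filter (\<lambda>f. odd (length f)) (Lc c es) = [[c]]"
  by (auto simp: Lc_def filter_empty_conv)

lemma filter_even_Lc: "\<forall>e\<in>set es. even (length e) \<Longrightarrow>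
   filter (\<lambda>f. even (length f)) (Lc c es) = filter (\<lambda>e. \<not> e < [c]) es @ filter (\<lambda>e. e < [c]) es"
proof -
  assume ev: "\<forall>e\<in>set es. even (length e)"
  have a: "filter (\<lambda>x. \<not> x < [c] \<and> even (length x)) es = filter (\<lambda>e. \<not> e < [c]) es"
    by (rule filter_cong) (use ev in auto)
  have b: "filter (\<lambda>x. x < [c] \<and> even (length x)) es = filter (\<lambda>e. e < [c]) es"
    by (rule filter_cong) (use ev in auto)
  show ?thesis using a b by (simp add: Lc_def)
qed

lemma dec_props:
  assumes g: "good (Ow, E)" and f: "length Ow < 2"
  shows "mset (dec (Ow, E)) = mset (Ow @ E) \<and>
    length (filter (\<lambda>f. odd (length f)) (lyndon_fact (dec (Ow, E)))) \<le> 1 \<and>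
    (\<forall>f\<in>set (lyndon_fact (dec (Ow, E))). odd (length f) \<longrightarrow> length f = 1)"
proof -
  have ev: "\<forall>e\<in>set (lyndon_fact E). even (length e)" using good_even[OF g] .
  consider "Ow = []" | c where "Ow = [c]" using final_cases[OF f] by blast
  then show ?thesis
  proof cases
    case 1
    then have "filter (\<lambda>f. odd (length f)) (lyndon_fact (dec (Ow, E))) = []" using ev
      by (simp add: dec_def filter_empty_conv)
    then show ?thesis using 1 ev by (auto simp: dec_def filter_empty_conv)
  next
    case (2 c)
    have LF: "lyndon_fact (dec (Ow, E)) = Lc c (lyndon_fact E)" using dec_single[of c E] g 2 by simp
    have m: "mset (dec (Ow, E)) = mset E + {#c#}"
      using Lc_concat_mset[of c "lyndon_fact E"] 2 by (simp add: dec_def insert_letter_Lc)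
    have "\<forall>f\<in>set (Lc c (lyndon_fact E)). odd (length f) \<longrightarrow> length f = 1"
      using ev by (auto simp: Lc_def)
    then show ?thesis using LF m filter_odd_Lc[OF ev, of c] 2 by (simp add: ac_simps)
  qed
qed

lemma even_length_E: "good (Ow, E) \<Longrightarrow> even (length E)"
  using even_concat[OF good_even] LF_concat2[of E] by metis

lemma dec_inj:
  assumes g1: "good (O1, E1)" and f1: "length O1 < 2" and g2: "good (O2, E2)" and f2: "length O2 < 2"
    and len: "length O1 + length E1 = length O2 + length E2" and d: "dec (O1, E1) = dec (O2, E2)"
  shows "(O1, E1) = (O2, E2)"
proof -
  have e1: "even (length E1)" and e2: "even (length E2)" using even_length_E g1 g2 by auto
  have "even (length O1) = even (length O2)" using len e1 e2 by (metis even_add)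
  then consider "O1 = []" "O2 = []" | c1 c2 where "O1 = [c1]" "O2 = [c2]"
    using final_cases[OF f1] final_cases[OF f2] by fastforce
  then show ?thesis
  proof cases
    case 1 then show ?thesis using d by (simp add: dec_def)
  next
    case 2
    have ev1: "\<forall>e\<in>set (lyndon_fact E1). even (length e)" using good_even[OF g1] .
    have ev2: "\<forall>e\<in>set (lyndon_fact E2). even (length e)" using good_even[OF g2] .
    have L: "Lc c1 (lyndon_fact E1) = Lc c2 (lyndon_fact E2)"
      using dec_single[of c1 E1] dec_single[of c2 E2] g1 g2 2 d by simp
    then have "[[c1]] = [[c2]]" using filter_odd_Lc[OF ev1, of c1] filter_odd_Lc[OF ev2, of c2] by simp
    then have c: "c1 = c2" by simp
    have "filter (\<lambda>e. \<not> e < [c1]) (lyndon_fact E1) @ filter (\<lambda>e. e < [c1]) (lyndon_fact E1) =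
          filter (\<lambda>e. \<not> e < [c1]) (lyndon_fact E2) @ filter (\<lambda>e. e < [c1]) (lyndon_fact E2)"
      using filter_even_Lc[OF ev1, of c1] filter_even_Lc[OF ev2, of c2] L c by simp
    then have "mset (lyndon_fact E1) = mset (lyndon_fact E2)"
      using mset_filter_split[of "\<lambda>e. \<not> e < [c1]" "lyndon_fact E1"]
        mset_filter_split[of "\<lambda>e. \<not> e < [c1]" "lyndon_fact E2"]
      by (metis mset_append)
    then have "lyndon_fact E1 = lyndon_fact E2" using valid_eq_mset LF_valid by blast
    then have "E1 = E2" using LF_concat2 by metis
    then show ?thesis using 2 c by simp
  qed
qed


lemma LF_Nil[simp]: "lyndon_fact [] = []"
  using LF_Nil_iff by blast

lemma LF_single[simp]: "lyndon_fact [c] = [[c]]"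
  using LF_concat[of "[[c]]"] by simp

lemma dec_surj:
  assumes a1: "length (filter (\<lambda>f. odd (length f)) (lyndon_fact u)) \<le> 1"
    and a2: "\<forall>f\<in>set (lyndon_fact u). odd (length f) \<longrightarrow> length f = 1"
  shows "\<exists>y. good y \<and> length (fst y) < 2 \<and> dec y = u \<and> mset (fst y @ snd y) = mset u"
proof -
  define us where "us = lyndon_fact u"
  have vus: "valid us" and cus: "concat us = u" using LF_props us_def by auto
  show ?thesis
  proof (cases "filter (\<lambda>f. odd (length f)) us = []")
    case True
    then have ev: "\<forall>f\<in>set us. even (length f)" by (auto simp: filter_empty_conv)
    have "good ([], u)" using ev by (simp add: good_def goodL_def us_def)
    then show ?thesis by (intro exI[of _ "([], u)"]) (simp add: dec_def)
  next
    case False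
    then obtain f where fo: "filter (\<lambda>f. odd (length f)) us = [f]" using a1 us_def
      by (cases "filter (\<lambda>f. odd (length f)) us") auto
    then have "f \<in> set us" "odd (length f)" by (metis filter_eq_ConsD in_set_conv_decomp)+
    then have "length f = 1" using a2 us_def by simp
    then obtain c where fc: "f = [c]" by (cases f) auto
    define es where "es = filter (\<lambda>f. even (length f)) us"
    have ves: "valid es" using valid_filter[OF vus] by (simp add: es_def)
    have LFE: "lyndon_fact (concat es) = es" using LF_concat[OF ves] .
    have eves: "\<forall>e\<in>set es. even (length e)" by (simp add: es_def)
    have gy: "good ([c], concat es)" using eves LFE by (simp add: good_def goodL_def)
    have "Lc c es = us"
    proof (rule valid_eq_mset[OF Lc_valid[OF ves] vus])
      have "mset us = mset es + mset (filter (\<lambda>f. odd (length f)) us)"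
        using mset_filter_split[of "\<lambda>f. even (length f)" us] by (simp add: es_def)
      then show "mset (Lc c es) = mset us" using fo fc Lc_mset[of c es] by simp
    qed
    then have d: "dec ([c], concat es) = u" using LFE cus by (simp add: dec_def insert_letter_Lc)
    have "mset u = mset (concat es) + mset (concat (filter (\<lambda>f. odd (length f)) us))"
      using mset_concat_filter_split[of "\<lambda>f. even (length f)" us] cus by (simp add: es_def)
    then have "mset ([c] @ concat es) = mset u" using fo fc by simp
    then show ?thesis using gy d by (intro exI[of _ "([c], concat es)"]) simp
  qed
qed

lemma good_init: "good (w, []) \<longleftrightarrow> (\<forall>f\<in>set (lyndon_fact w). odd (length f)) \<and> distinct (lyndon_fact w)"
  by (simp add: good_def goodL_def)

theorem theorem4p3:
  fixes A :: "'a::linorder set" and n :: nat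
  assumes "finite A" and "0 < n"
  shows "bij_betw Psi (W_odd A n) (W_even A n) \<and> (\<forall>w\<in>W_odd A n. wt (Psi w) = wt w)"
proof -
  have key: "good (w, []) \<and> good ((psi_step ^^ n) (w, [])) \<and> length (fst ((psi_step ^^ n) (w, []))) < 2 \<and>
      mset (fst ((psi_step ^^ n) (w, [])) @ snd ((psi_step ^^ n) (w, []))) = mset w \<and>
      Psi w = dec ((psi_step ^^ n) (w, [])) \<and> mset (Psi w) = mset w"
    if w: "w \<in> W_odd A n" for w
  proof -
    have g: "good (w, [])" using w by (simp add: W_odd_def good_init)
    have lw: "length w = n" using w by (simp add: W_odd_def words_def)
    obtain Oy Ey where y: "(psi_step ^^ n) (w, []) = (Oy, Ey)" by (cases "(psi_step ^^ n) (w, [])") auto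
    have gy: "good (Oy, Ey)" "mset (Oy @ Ey) = mset w" using good_iter[OF g, of n] y by auto
    have fy: "length Oy < 2" using final_iter[OF g, of n] lw y by simp
    have P: "Psi w = dec (Oy, Ey)" using Psi_dec[of w] lw y by simp
    have "mset (Psi w) = mset w" using dec_props[OF gy(1) fy] P gy(2) by simp
    then show ?thesis using g gy fy P y by simp
  qed
  have inj: "inj_on Psi (W_odd A n)"
  proof (rule inj_onI)
    fix w1 w2 assume w1: "w1 \<in> W_odd A n" and w2: "w2 \<in> W_odd A n" and eq: "Psi w1 = Psi w2"
    obtain O1 E1 where y1: "(psi_step ^^ n) (w1, []) = (O1, E1)" by (cases "(psi_step ^^ n) (w1, [])") auto
    obtain O2 E2 where y2: "(psi_step ^^ n) (w2, []) = (O2, E2)" by (cases "(psi_step ^^ n) (w2, [])") auto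
    have k1: "good (w1, [])" "good (O1, E1)" "length O1 < 2" "mset (O1 @ E1) = mset w1" "Psi w1 = dec (O1, E1)"
      using key[OF w1] y1 by auto
    have k2: "good (w2, [])" "good (O2, E2)" "length O2 < 2" "mset (O2 @ E2) = mset w2" "Psi w2 = dec (O2, E2)"
      using key[OF w2] y2 by auto
    have l1: "length w1 = n" and l2: "length w2 = n" using w1 w2 by (simp_all add: W_odd_def words_def)
    have "length (O1 @ E1) = length w1" using arg_cong[OF k1(4), of size] by simp
    moreover have "length (O2 @ E2) = length w2" using arg_cong[OF k2(4), of size] by simp
    ultimately have len: "length O1 + length E1 = length O2 + length E2" using l1 l2 by simp
    have "(O1, E1) = (O2, E2)" using dec_inj[OF k1(2,3) k2(2,3) len] eq k1(5) k2(5) by simp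
    then have "backw n ((psi_step ^^ n) (w1, [])) = backw n ((psi_step ^^ n) (w2, []))" using y1 y2 by simp
    then show "w1 = w2" using back_iter[OF k1(1), of n n] back_iter[OF k2(1), of n n] by simp
  qed
  have sub: "Psi ` W_odd A n \<subseteq> W_even A n"
  proof
    fix u assume "u \<in> Psi ` W_odd A n"
    then obtain w where w: "w \<in> W_odd A n" and u: "u = Psi w" by blast
    obtain Oy Ey where y: "(psi_step ^^ n) (w, []) = (Oy, Ey)" by (cases "(psi_step ^^ n) (w, [])") auto
    have k: "good (Oy, Ey)" "length Oy < 2" "Psi w = dec (Oy, Ey)" "mset (Psi w) = mset w"
      using key[OF w] y by auto
    have "set (Psi w) = set w" using arg_cong[OF k(4), of set_mset] by simp
    moreover have "length (Psi w) = length w" using arg_cong[OF k(4), of size] by simp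
    ultimately have "Psi w \<in> words A n" using w by (simp add: W_odd_def words_def)
    then show "u \<in> W_even A n" using dec_props[OF k(1,2)] k(3) u by (simp add: W_even_def)
  qed
  have sup: "W_even A n \<subseteq> Psi ` W_odd A n"
  proof
    fix u assume u: "u \<in> W_even A n"
    then obtain y where y: "good y" "length (fst y) < 2" "dec y = u" "mset (fst y @ snd y) = mset u"
      using dec_surj[of u] by (auto simp: W_even_def)
    obtain z k where z: "good z" "snd z = []" "(psi_step ^^ k) z = y" "mset (fst z @ snd z) = mset (fst y @ snd y)"
      using reach[OF y(1)] by blast
    define w where "w = fst z"
    have zw: "z = (w, [])" using z(2) w_def by (cases z) auto
    have mw: "mset w = mset u" using z(4) y(4) zw by simp
    have "set w = set u" using arg_cong[OF mw, of set_mset] by simp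
    moreover have "length w = length u" using arg_cong[OF mw, of size] by simp
    ultimately have ww: "w \<in> words A n" using u by (simp add: W_even_def words_def)
    have gz: "good (w, [])" using z(1) zw by simp
    then have wo: "w \<in> W_odd A n" using ww by (simp add: W_odd_def good_init)
    have lw: "length w = n" using ww by (simp add: words_def)
    have "(psi_step ^^ n) z = y"
    proof (cases "k \<le> n")
      case True
      then show ?thesis using stable_iter[of k z n] y(2) z(3) by simp
    next
      case False
      have "length (fst ((psi_step ^^ n) z)) < 2" using final_iter[OF z(1), of n] zw lw by simp
      then have "(psi_step ^^ k) z = (psi_step ^^ n) z" using stable_iter[of n z k] False by simp
      then show ?thesis using z(3) by simp
    qed
    then have "Psi w = u" using Psi_dec[of w] lw zw y(3) by simp
    then show "u \<in> Psi ` W_odd A n" using wo by blast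
  qed
  have bij: "bij_betw Psi (W_odd A n) (W_even A n)"
    unfolding bij_betw_def using inj sub sup by blast
  have "\<forall>w\<in>W_odd A n. wt (Psi w) = wt w"
  proof
    fix w assume w: "w \<in> W_odd A n"
    have "mset (Psi w) = mset w" using key[OF w] by blast
    then have "\<And>a. count (mset (Psi w)) a = count (mset w) a" by simp
    then show "wt (Psi w) = wt w" unfolding wt_def count_mset by (rule ext)
  qed
  then show ?thesis using bij by simp
qed

end
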